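(* Let $\kappa_*>0$ and let $H^*$ be a probability measure on $(0,\infty)$. Consider $(X_i,\theta_i)$ generated by $X_i\mid\theta_i\sim\mathrm{Poi}(\theta_i)$, $\theta_i\mid\lambda_i\sim\mathrm{Gamma}(\kappa_*,\lambda_i)$ (shape-rate), $\lambda_i\sim H^*$. Let $0<\beta<1$. Then there exists a unique constant $k^*\ge0$ such that the set-valued rule $$\mathcal I^*(x)=\{\theta\ge0:\pi_{H^*}(\theta\mid x)\ge k^*\},\qquad x=0,1,2,\dots,$$ satisfies $\mathbb P_{H^*}(\theta_i\in\mathcal I^*(X_i))=1-\beta$. Moreover, $\mathcal I^*$ solves, up to Lebesgue-null sets, the problem of minimizing $\mathbb E_{H^*}[|\mathcal I(X_i)|]$ over all measurable set-valued rules $\mathcal I:x\mapsto\mathcal I(x)\subset(0,\infty)$ subject to $\mathbb P_{H^*}(\theta_i\in\mathcal I(X_i))\ge1-\beta$.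
   Context: $f_{H^*}(x)=\int\frac{\Gamma(x+\kappa_* )}{x!\,\Gamma(\kappa_* )}\left(\frac{1}{\lambda+1}\right)^x\left(\frac{\lambda}{\lambda+1}\right)^{\kappa_*}dH^*(\lambda)$ is the marginal pmf of $X_i$; $g_{H^*}(\theta)=\int\frac{\lambda^{\kappa_*}}{\Gamma(\kappa_* )}\theta^{\kappa_*-1}e^{-\lambda\theta}dH^*(\lambda)$ is the prior density of $\theta_i$; with $p_\theta(x)=e^{-\theta}\theta^x/x!$, $\pi_{H^*}(\theta\mid x)=p_\theta(x)g_{H^*}(\theta)/f_{H^*}(x)$ for $\theta>0$ is the posterior density. Probabilities are under the joint law of $(\theta_i,X_i)$; $|A|$ denotes the Lebesgue measure of $A\subset(0,\infty)$. *)

theory Defs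
  imports "HOL-Probability.Probability"
begin

definition pois :: "real \<Rightarrow> nat \<Rightarrow> real" where
  "pois \<theta> x = exp (- \<theta>) * \<theta> ^ x / fact x"

text \<open>Marginal pmf f_H(x) of X_i.\<close>
definition fH :: "real \<Rightarrow> real measure \<Rightarrow> nat \<Rightarrow> real" where
  "fH \<kappa> H x = (\<integral>l. Gamma (real x + \<kappa>) / (fact x * Gamma \<kappa>)
        * (1 / (l + 1)) ^ x * (l / (l + 1)) powr \<kappa> \<partial>H)"

definition gH :: "real \<Rightarrow> real measure \<Rightarrow> real \<Rightarrow> real" where
  "gH \<kappa> H \<theta> = (\<integral>l. l powr \<kappa> / Gamma \<kappa> * \<theta> powr (\<kappa> - 1) * exp (- l * \<theta>) \<partial>H)"

definition postH :: "real \<Rightarrow> real measure \<Rightarrow> nat \<Rightarrow> real \<Rightarrow> real" where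
  "postH \<kappa> H x \<theta> = (if \<theta> > 0 then pois \<theta> x * gH \<kappa> H \<theta> / fH \<kappa> H x else 0)"

definition jointH :: "real \<Rightarrow> real measure \<Rightarrow> (real \<times> nat) measure" where
  "jointH \<kappa> H = density (lborel \<Otimes>\<^sub>M count_space UNIV)
     (\<lambda>(\<theta>, x). ennreal (if \<theta> > 0 then gH \<kappa> H \<theta> * pois \<theta> x else 0))"

definition coverage :: "real \<Rightarrow> real measure \<Rightarrow> (nat \<Rightarrow> real set) \<Rightarrow> real" where
  "coverage \<kappa> H I = measure (jointH \<kappa> H) {(\<theta>, x). \<theta> \<in> I x}"

definition exp_length :: "real \<Rightarrow> real measure \<Rightarrow> (nat \<Rightarrow> real set) \<Rightarrow> ennreal" where
  "exp_length \<kappa> H I = (\<integral>\<^sup>+ (\<theta>, x). emeasure lborel (I x) \<partial>jointH \<kappa> H)"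

definition hpd_rule :: "real \<Rightarrow> real measure \<Rightarrow> real \<Rightarrow> nat \<Rightarrow> real set" where
  "hpd_rule \<kappa> H k x = {\<theta>. \<theta> \<ge> 0 \<and> postH \<kappa> H x \<theta> \<ge> k}"

definition meas_rule :: "(nat \<Rightarrow> real set) \<Rightarrow> bool" where
  "meas_rule I \<longleftrightarrow> (\<forall>x. I x \<in> sets lborel \<and> I x \<subseteq> {0<..})"

end

theory Submission
  imports Defs "HOL-Complex_Analysis.Conformal_Mappings" "HOL-Real_Asymp.Real_Asymp"
begin
lemma powr_exp_bound:
  fixes l a c :: real assumes "l > 0" "a > 0" "c > 0"
  shows "l powr a * exp (- (c * l)) \<le> (a / c) powr a"
proof -
  have e: "c * l / a \<le> exp (c * l / a)" using exp_ge_add_one_self[of "c*l/a"] by linarith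
  have "l * exp (- (c * l / a)) \<le> a / c"
  proof -
    have "l = (a/c) * (c*l/a)" using assms by (simp add: field_simps)
    also have "... \<le> (a/c) * exp (c*l/a)" using e assms by (intro mult_left_mono) auto
    finally show ?thesis by (simp add: exp_minus field_simps)
  qed
  hence "(l * exp (- (c * l / a))) powr a \<le> (a / c) powr a"
    using assms by (intro powr_mono2) auto
  moreover have "(l * exp (- (c * l / a))) powr a = l powr a * exp (- (c * l))"
  proof -
    have h1: "ln (l * exp (- (c * l / a))) = ln l - c * l / a" using assms by (simp add: ln_mult)
    have h2: "a * (ln l - c * l / a) = a * ln l + - (c * l)" using assms by (simp add: field_simps)
    have "(l * exp (- (c*l/a))) powr a = exp (a * ln (l * exp (- (c*l/a))))"
      using assms by (simp add: powr_def)
    also have "\<dots> = exp (a * ln l + - (c*l))" by (simp only: h1 h2)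
    also have "\<dots> = l powr a * exp (- (c*l))" using assms by (simp only: exp_add powr_def) simp
    finally show ?thesis .
  qed
  ultimately show ?thesis by simp
qed

lemma norm_exp_sub1: "norm (exp (z::complex) - 1) \<le> norm z * exp (norm z)"
  using Taylor_exp_field[of z 0] by (simp add: mult.commute)

locale setting =
  fixes \<kappa> :: real and H :: "real measure"
  assumes kpos: "\<kappa> > 0" and prob: "prob_space H" and sH: "sets H = sets borel"
    and H1: "measure H {0<..} = 1"
begin

lemma finH: "finite_measure H" using prob by (simp add: prob_space_def)

lemma spaceH: "space H = UNIV" using sets_eq_imp_space_eq[OF sH] by simp

lemma measH: "measurable H = measurable borel"
  by (intro ext measurable_cong_sets sH refl)

lemma AE_pos: "AE l in H. l > 0"
proof -
  have "{0<..} \<in> sets H" using sH by simp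
  thus ?thesis using prob_space.AE_prob_1[OF prob, of "{0<..}"] H1 by auto
qed

definition Lr :: "real \<Rightarrow> real" where
  "Lr t = (\<integral>l. (if 0 < l then l powr \<kappa> * exp (- (l * t)) else 0) \<partial>H)"

definition Fc :: "complex \<Rightarrow> complex" where
  "Fc z = (\<integral>l. (if 0 < l then complex_of_real (l powr \<kappa>) * exp (- (of_real l * z)) else 0) \<partial>H)"

definition Fd :: "complex \<Rightarrow> complex" where
  "Fd z = (\<integral>l. (if 0 < l then - (of_real l * complex_of_real (l powr \<kappa>) * exp (- (of_real l * z))) else 0) \<partial>H)"

lemma Fc_real: "Fc (of_real t) = of_real (Lr t)"
proof -
  have "Fc (of_real t) = (\<integral>l. complex_of_real (if 0 < l then l powr \<kappa> * exp (- (l * t)) else 0) \<partial>H)"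
    unfolding Fc_def by (intro Bochner_Integration.integral_cong refl) (auto simp flip: exp_of_real)
  thus ?thesis unfolding Lr_def by simp
qed

lemma Fc_integrable:
  assumes "Re z > 0"
  shows "integrable H (\<lambda>l. if 0 < l then complex_of_real (l powr \<kappa>) * exp (- (of_real l * z)) else 0)"
proof (rule finite_measure.integrable_const_bound[OF finH, where B="(\<kappa> / Re z) powr \<kappa>"])
  show "AE l in H. norm (if 0 < l then complex_of_real (l powr \<kappa>) * exp (- (of_real l * z)) else 0) \<le> (\<kappa> / Re z) powr \<kappa>"
  proof (intro AE_I2)
    fix l :: real
    show "norm (if 0 < l then complex_of_real (l powr \<kappa>) * exp (- (of_real l * z)) else 0) \<le> (\<kappa> / Re z) powr \<kappa>"
    proof (cases "l > 0")
      case True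
      have "norm (complex_of_real (l powr \<kappa>) * exp (- (of_real l * z))) = l powr \<kappa> * exp (- (Re z * l))"
        by (simp add: norm_mult norm_exp_eq_Re mult.commute)
      also have "\<dots> \<le> (\<kappa> / Re z) powr \<kappa>" by (rule powr_exp_bound) (use True kpos assms in auto)
      finally show ?thesis using True by simp
    qed auto
  qed
  show "(\<lambda>l. if 0 < l then complex_of_real (l powr \<kappa>) * exp (- (of_real l * z)) else 0) \<in> borel_measurable H"
    unfolding measH by measurable
qed

lemma Fd_integrable_meas:
  "(\<lambda>l. if 0 < l then - (of_real l * complex_of_real (l powr \<kappa>) * exp (- (of_real l * z))) else 0) \<in> borel_measurable H"
  unfolding measH by measurable

lemma diff_bound:
  fixes l r :: real and h z0 :: complex
  assumes l: "l > 0" and r: "r > 0" and z0: "Re z0 = 2 * r" and h: "norm h < r" "h \<noteq> 0"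
  shows "norm (complex_of_real (l powr \<kappa>) * (exp (- (of_real l * (z0 + h))) - exp (- (of_real l * z0))) / h)
         \<le> ((\<kappa> + 1) / r) powr (\<kappa> + 1)"
proof -
  have e1: "exp (- (of_real l * (z0 + h))) - exp (- (of_real l * z0)) = exp (- (of_real l * z0)) * (exp (- (of_real l * h)) - 1)"
    by (simp add: distrib_left exp_add[symmetric] algebra_simps flip: exp_add)
  have n1: "norm (exp (- (of_real l * z0))) = exp (- (l * (2 * r)))"
    using z0 by (simp add: norm_exp_eq_Re)
  have nw: "norm (- (complex_of_real l * h)) = l * norm h" using l by (simp add: norm_mult)
  have n2: "norm (exp (- (of_real l * h)) - 1) \<le> l * norm h * exp (l * r)"
  proof -
    have "norm (exp (- (of_real l * h)) - 1) \<le> norm (- (complex_of_real l * h)) * exp (norm (- (complex_of_real l * h)))"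
      by (rule norm_exp_sub1)
    also have "\<dots> \<le> l * norm h * exp (l * r)"
      unfolding nw using l h by (intro mult_left_mono) (auto intro!: mult_left_mono)
    finally show ?thesis .
  qed
  have "norm (exp (- (of_real l * (z0 + h))) - exp (- (of_real l * z0))) \<le> exp (- (l * (2 * r))) * (l * norm h * exp (l * r))"
    unfolding e1 norm_mult n1 by (intro mult_left_mono n2) auto
  also have "\<dots> = l * norm h * exp (- (r * l))"
    by (simp add: exp_minus field_simps flip: exp_add)
  finally have n3: "norm (exp (- (of_real l * (z0 + h))) - exp (- (of_real l * z0))) \<le> l * norm h * exp (- (r * l))" .
  have "norm (complex_of_real (l powr \<kappa>) * (exp (- (of_real l * (z0 + h))) - exp (- (of_real l * z0))) / h)
        = l powr \<kappa> * norm (exp (- (of_real l * (z0 + h))) - exp (- (of_real l * z0))) / norm h"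
    using l by (simp add: norm_mult norm_divide)
  also have "\<dots> \<le> l powr \<kappa> * (l * norm h * exp (- (r * l))) / norm h"
    using h by (intro divide_right_mono mult_left_mono n3) auto
  also have "\<dots> = l powr (\<kappa> + 1) * exp (- (r * l))"
    using h l by (simp add: powr_add field_simps)
  also have "\<dots> \<le> ((\<kappa> + 1) / r) powr (\<kappa> + 1)"
    by (rule powr_exp_bound) (use l r kpos in auto)
  finally show ?thesis .
qed

lemma Fc_deriv:
  assumes z0: "Re z0 > 0"
  shows "(Fc has_field_derivative Fd z0) (at z0)"
proof -
  define r where "r = Re z0 / 2"
  have r: "r > 0" "Re z0 = 2 * r" using z0 by (auto simp: r_def)
  define D where "D y l = (if 0 < l then complex_of_real (l powr \<kappa>) * (exp (- (of_real l * y)) - exp (- (of_real l * z0))) / (y - z0) else 0)" for y l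
  define g where "g = (\<lambda>l. if 0 < l then - (of_real l * complex_of_real (l powr \<kappa>) * exp (- (of_real l * z0))) else 0)"
  define B where "B = ((\<kappa> + 1) / r) powr (\<kappa> + 1)"
  have quot: "(Fc y - Fc z0) / (y - z0) = integral\<^sup>L H (D y)" if "Re y > 0" for y
  proof -
    have "Fc y - Fc z0 = (\<integral>l. (if 0 < l then complex_of_real (l powr \<kappa>) * exp (- (of_real l * y)) else 0)
         - (if 0 < l then complex_of_real (l powr \<kappa>) * exp (- (of_real l * z0)) else 0) \<partial>H)"
      unfolding Fc_def by (rule Bochner_Integration.integral_diff[symmetric]) (intro Fc_integrable that z0)+
    also have "\<dots> = (\<integral>l. (if 0 < l then complex_of_real (l powr \<kappa>) * (exp (- (of_real l * y)) - exp (- (of_real l * z0))) else 0) \<partial>H)"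
      by (intro Bochner_Integration.integral_cong refl) (auto simp: algebra_simps)
    finally have "(Fc y - Fc z0) / (y - z0) = (\<integral>l. (if 0 < l then complex_of_real (l powr \<kappa>) * (exp (- (of_real l * y)) - exp (- (of_real l * z0))) else 0) \<partial>H) / (y - z0)"
      by simp
    also have "\<dots> = integral\<^sup>L H (D y)"
      unfolding D_def by (subst integral_divide_zero[symmetric]) (intro Bochner_Integration.integral_cong refl, auto)
    finally show ?thesis .
  qed
  have "((\<lambda>y. (Fc y - Fc z0) / (y - z0)) \<longlongrightarrow> Fd z0) (at z0)"
  proof (subst tendsto_at_iff_sequentially, intro allI impI)
    fix X :: "nat \<Rightarrow> complex" assume X: "\<forall>i. X i \<in> UNIV - {z0}" "X \<longlonglongrightarrow> z0"
    from tendstoD[OF X(2) r(1)] obtain N where N: "\<And>n. n \<ge> N \<Longrightarrow> dist (X n) z0 < r"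
      by (auto simp: eventually_sequentially)
    have XN: "(\<lambda>n. X (n + N)) \<longlonglongrightarrow> z0" using X(2) by (rule LIMSEQ_ignore_initial_segment)
    have Xne: "X (n + N) \<noteq> z0" for n using X(1) by auto
    have Xr: "norm (X (n + N) - z0) < r" for n using N[of "n+N"] by (simp add: dist_norm)
    have Xre: "Re (X (n + N)) > 0" for n
    proof -
      have "Re z0 - Re (X (n + N)) \<le> norm (X (n + N) - z0)"
        using abs_Re_le_cmod[of "X (n + N) - z0"] by auto
      thus ?thesis using Xr[of n] r by linarith
    qed
    have "(\<lambda>n. integral\<^sup>L H (D (X (n + N)))) \<longlonglongrightarrow> integral\<^sup>L H g"
    proof (rule integral_dominated_convergence[where w="\<lambda>_. B"])
      show "g \<in> borel_measurable H" unfolding g_def measH by measurable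
      show "D (X (n + N)) \<in> borel_measurable H" for n unfolding D_def measH by measurable
      show "integrable H (\<lambda>_. B)" using finH by (simp add: finite_measure.integrable_const)
      show "AE l in H. (\<lambda>n. D (X (n + N)) l) \<longlonglongrightarrow> g l"
      proof (intro AE_I2)
        fix l :: real
        show "(\<lambda>n. D (X (n + N)) l) \<longlonglongrightarrow> g l"
        proof (cases "l > 0")
          case True
          have "((\<lambda>y. exp (- (of_real l * y))) has_field_derivative (- (of_real l) * exp (- (of_real l * z0)))) (at z0)"
            by (auto intro!: derivative_eq_intros)
          hence "((\<lambda>y. (exp (- (of_real l * y)) - exp (- (of_real l * z0))) / (y - z0)) \<longlongrightarrow> - (of_real l) * exp (- (of_real l * z0))) (at z0)"
            by (simp add: has_field_derivative_iff)
          hence "((\<lambda>y. (exp (- (of_real l * y)) - exp (- (of_real l * z0))) / (y - z0)) \<circ> (\<lambda>n. X (n + N))) \<longlonglongrightarrow> - (of_real l) * exp (- (of_real l * z0))"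
            using XN Xne by (subst (asm) tendsto_at_iff_sequentially) auto
          hence "(\<lambda>n. complex_of_real (l powr \<kappa>) * ((exp (- (of_real l * X (n + N))) - exp (- (of_real l * z0))) / (X (n + N) - z0)))
                   \<longlonglongrightarrow> complex_of_real (l powr \<kappa>) * (- (of_real l) * exp (- (of_real l * z0)))"
            by (intro tendsto_mult_left) (simp add: o_def)
          thus ?thesis using True by (simp add: D_def g_def algebra_simps)
        qed (simp add: D_def g_def)
      qed
      show "AE l in H. norm (D (X (n + N)) l) \<le> B" for n
      proof (intro AE_I2)
        fix l :: real
        show "norm (D (X (n + N)) l) \<le> B"
        proof (cases "l > 0")
          case True
          have "norm (complex_of_real (l powr \<kappa>) * (exp (- (of_real l * (z0 + (X (n + N) - z0)))) - exp (- (of_real l * z0))) / (X (n + N) - z0))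
              \<le> ((\<kappa> + 1) / r) powr (\<kappa> + 1)"
            by (rule diff_bound) (use True r Xr[of n] Xne[of n] in auto)
          thus ?thesis using True by (simp add: D_def B_def)
        next
          case False
          have "B \<ge> 0" unfolding B_def by simp
          thus ?thesis using False by (simp add: D_def)
        qed
      qed
    qed
    hence "(\<lambda>n. ((\<lambda>y. (Fc y - Fc z0) / (y - z0)) \<circ> X) (n + N)) \<longlonglongrightarrow> Fd z0"
      using quot[OF Xre] by (simp add: Fd_def g_def o_def)
    thus "((\<lambda>y. (Fc y - Fc z0) / (y - z0)) \<circ> X) \<longlonglongrightarrow> Fd z0"
      by (rule LIMSEQ_offset)
  qed
  thus ?thesis by (simp add: has_field_derivative_iff)
qed

lemma Fc_holo: "Fc holomorphic_on {z. Re z > 0}"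
  unfolding holomorphic_on_def field_differentiable_def
  using Fc_deriv has_field_derivative_at_within by blast

lemma Lr_cont: "continuous_on {0<..} Lr"
proof -
  have "continuous_on {z. Re z > 0} Fc" using Fc_holo holomorphic_on_imp_continuous_on by blast
  hence "continuous_on (complex_of_real ` {0<..}) Fc" by (rule continuous_on_subset) auto
  hence "continuous_on {0<..} (Fc \<circ> complex_of_real)"
    by (intro continuous_on_compose continuous_intros)
  hence "continuous_on {0<..} (\<lambda>t. Re (Fc (of_real t)))"
    by (intro continuous_intros) (simp add: o_def)
  thus ?thesis by (simp add: Fc_real)
qed

lemma Lr_integrable:
  assumes "t > 0"
  shows "integrable H (\<lambda>l. if 0 < l then l powr \<kappa> * exp (- (l * t)) else 0)"
proof (rule finite_measure.integrable_const_bound[OF finH, where B="(\<kappa> / t) powr \<kappa>"])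
  show "AE l in H. norm (if 0 < l then l powr \<kappa> * exp (- (l * t)) else 0) \<le> (\<kappa> / t) powr \<kappa>"
  proof (intro AE_I2)
    fix l :: real
    show "norm (if 0 < l then l powr \<kappa> * exp (- (l * t)) else 0) \<le> (\<kappa> / t) powr \<kappa>"
      using powr_exp_bound[of l \<kappa> t] kpos assms by (auto simp: mult.commute)
  qed
  show "(\<lambda>l. if 0 < l then l powr \<kappa> * exp (- (l * t)) else 0) \<in> borel_measurable H"
    unfolding measH by measurable
qed

lemma Lr_pos: assumes "t > 0" shows "Lr t > 0"
proof -
  have nn: "AE l in H. 0 \<le> (if 0 < l then l powr \<kappa> * exp (- (l * t)) else 0)" by auto
  have ge: "Lr t \<ge> 0" unfolding Lr_def by (intro Bochner_Integration.integral_nonneg) auto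
  have "Lr t \<noteq> 0"
  proof
    assume "Lr t = 0"
    hence "AE l in H. (if 0 < l then l powr \<kappa> * exp (- (l * t)) else 0) = 0"
      unfolding Lr_def using integral_nonneg_eq_0_iff_AE[OF Lr_integrable[OF assms] nn] by simp
    with AE_pos have "AE l in H. False" by eventually_elim auto
    thus False using prob_space.AE_False[OF prob] by simp
  qed
  thus ?thesis using ge by simp
qed

lemma Lr_nonneg: "Lr t \<ge> 0"
  unfolding Lr_def by (intro Bochner_Integration.integral_nonneg) auto

lemma Lr_bound: assumes "t \<ge> 1" shows "Lr t \<le> \<kappa> powr \<kappa>"
proof -
  have "Lr t \<le> (\<integral>l. \<kappa> powr \<kappa> \<partial>H)"
    unfolding Lr_def
  proof (rule integral_mono)
    show "integrable H (\<lambda>l. if 0 < l then l powr \<kappa> * exp (- (l * t)) else 0)"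
      using Lr_integrable assms by simp
    show "integrable H (\<lambda>l. \<kappa> powr \<kappa>)" using finH by (simp add: finite_measure.integrable_const)
    fix l :: real
    show "(if 0 < l then l powr \<kappa> * exp (- (l * t)) else 0) \<le> \<kappa> powr \<kappa>"
    proof (cases "l > 0")
      case True
      have "l powr \<kappa> * exp (- (l * t)) \<le> l powr \<kappa> * exp (- (1 * l))"
        using True assms by (intro mult_left_mono) auto
      also have "\<dots> \<le> (\<kappa> / 1) powr \<kappa>" by (rule powr_exp_bound) (use True kpos in auto)
      finally show ?thesis using True by simp
    qed auto
  qed
  also have "\<dots> = \<kappa> powr \<kappa>" using prob_space.prob_space[OF prob] by simp
  finally show ?thesis .
qed

lemma tail_small:
  assumes "c > 0"
  shows "\<forall>\<^sub>F t in at_top. t powr a * exp (- t) * Lr t < c"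
proof -
  have lim: "((\<lambda>t::real. t powr a * exp (- t)) \<longlongrightarrow> 0) at_top" by real_asymp
  have h: "\<kappa> powr \<kappa> + 1 > 0" by (smt (verit) powr_ge_zero)
  have pos: "c / (\<kappa> powr \<kappa> + 1) > 0" by (rule divide_pos_pos[OF assms h])
  have "\<forall>\<^sub>F t in at_top. t powr a * exp (- t) < c / (\<kappa> powr \<kappa> + 1)"
    using order_tendstoD(2)[OF lim pos] .
  moreover have "\<forall>\<^sub>F t in at_top. (t::real) \<ge> 1" by (rule eventually_ge_at_top)
  ultimately show ?thesis
  proof eventually_elim
    case (elim t)
    have nn: "t powr a * exp (- t) \<ge> 0" by simp
    have "t powr a * exp (- t) * Lr t \<le> t powr a * exp (- t) * \<kappa> powr \<kappa>"
      using Lr_bound[of t] elim(2) nn by (intro mult_left_mono) auto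
    also have "\<dots> \<le> t powr a * exp (- t) * (\<kappa> powr \<kappa> + 1)" using nn by (intro mult_left_mono) auto
    also have "\<dots> < c" using elim(1) by (simp add: field_simps add_pos_nonneg)
    finally show ?case .
  qed
qed

lemma level_null:
  assumes c: "c > 0"
  shows "{t. t > 0 \<and> t powr a * exp (- t) * Lr t = c} \<in> null_sets lborel"
proof (rule ccontr)
  define S where "S = {t. t > 0 \<and> t powr a * exp (- t) * Lr t = c}"
  assume nn: "S \<notin> null_sets lborel"
  define K where "K n = {1 / real (Suc n) .. real (Suc n)}" for n
  have "\<exists>n. infinite (K n \<inter> S)"
  proof (rule ccontr)
    assume "\<not> ?thesis"
    hence fin: "finite (K n \<inter> S)" for n by auto
    have "S \<subseteq> (\<Union>n. K n \<inter> S)"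
    proof
      fix t assume t: "t \<in> S"
      hence tp: "t > 0" by (simp add: S_def)
      obtain n :: nat where n1: "real n \<ge> t" using real_arch_simple by blast
      obtain m :: nat where m1: "real m \<ge> 1 / t" using real_arch_simple by blast
      have "1 / real (Suc (max n m)) \<le> t"
      proof -
        have "1 / t < real (Suc (max n m))" using m1 by simp
        thus ?thesis using tp by (simp add: field_simps)
      qed
      moreover have "t \<le> real (Suc (max n m))" using n1 by simp
      ultimately show "t \<in> (\<Union>n. K n \<inter> S)" using t by (auto simp: K_def)
    qed
    moreover have "countable (\<Union>n. K n \<inter> S)" by (intro countable_UN[OF countableI_type] countable_finite fin)
    ultimately have "countable S" using countable_subset by blast
    thus False using nn countable_imp_null_set_lborel by blast
  qed
  then obtain n where inf: "infinite (K n \<inter> S)" by blast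
  have "\<exists>\<xi>\<in>K n. \<xi> islimpt S"
    using finite_not_islimpt_in_compact[of "K n" S] inf by (auto simp: K_def)
  then obtain \<xi> where \<xi>: "\<xi> \<in> K n" "\<xi> islimpt S" by blast
  have \<xi>pos: "\<xi> > 0" using \<xi>(1) by (auto simp: K_def intro: less_le_trans[of 0 "1 / real (Suc n)"])
  define \<Omega> where "\<Omega> = {z. Re z > 0}"
  define \<psi> where "\<psi> z = z powr complex_of_real a * exp (- z) * Fc z - of_real c" for z
  have hol: "\<psi> holomorphic_on \<Omega>"
  proof -
    have "(\<lambda>z. z powr complex_of_real a) holomorphic_on \<Omega>"
      by (intro holomorphic_intros) (auto simp: \<Omega>_def complex_nonpos_Reals_iff)
    moreover have "Fc holomorphic_on \<Omega>" using Fc_holo by (simp add: \<Omega>_def)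
    ultimately show ?thesis unfolding \<psi>_def
      by (intro holomorphic_intros) (auto simp: \<Omega>_def complex_nonpos_Reals_iff)
  qed
  have val: "\<psi> (of_real t) = of_real (t powr a * exp (- t) * Lr t - c)" if "t > 0" for t
    using that by (simp add: \<psi>_def Fc_real powr_of_real flip: exp_of_real of_real_minus)
  have zero: "\<psi> z = 0" if "z \<in> complex_of_real ` S" for z
    using that by (auto simp: S_def val)
  have lim: "complex_of_real \<xi> islimpt (complex_of_real ` S)"
    using \<xi>(2) unfolding islimpt_approachable
    by (metis dist_of_real image_eqI of_real_eq_iff)
  obtain T where T: "T > 0" "T powr a * exp (- T) * Lr T < c"
  proof -
    have "\<forall>\<^sub>F t in at_top. t powr a * exp (- t) * Lr t < c \<and> t > 0"
      using tail_small[OF c, of a] eventually_gt_at_top[of 0] by eventually_elim auto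
    then obtain t where "t powr a * exp (- t) * Lr t < c \<and> t > 0" using eventually_happens'[OF trivial_limit_at_top_linorder] by blast
    thus ?thesis using that by blast
  qed
  have "\<psi> (of_real T) = 0"
  proof (rule analytic_continuation[OF hol])
    show "open \<Omega>" unfolding \<Omega>_def by (rule open_halfspace_Re_gt)
    show "connected \<Omega>" unfolding \<Omega>_def by (intro convex_connected convex_halfspace_Re_gt)
    show "complex_of_real ` S \<subseteq> \<Omega>" by (auto simp: S_def \<Omega>_def)
    show "complex_of_real \<xi> \<in> \<Omega>" using \<xi>pos by (simp add: \<Omega>_def)
    show "complex_of_real T \<in> \<Omega>" using T by (simp add: \<Omega>_def)
  qed (use lim zero in auto)
  hence "complex_of_real (T powr a * exp (- T) * Lr T - c) = 0" using val[OF T(1)] by simp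
  hence "T powr a * exp (- T) * Lr T = c" by (simp only: of_real_eq_0_iff)
  thus False using T(2) by simp
qed

end

lemma Gamma_scaled:
  fixes s c :: real assumes s: "s > 0" and c: "c > 0"
  shows "(\<integral>\<^sup>+t. ennreal (if t > 0 then t powr (s - 1) * exp (- (c * t)) else 0) \<partial>lborel) = ennreal (Gamma s / c powr s)"
proof -
  define J where "J = (\<integral>\<^sup>+t. ennreal (if t > 0 then t powr (s - 1) * exp (- (c * t)) else 0) \<partial>lborel)"
  define f where "f u = ennreal (indicator {0..} u * u powr (s - 1) / exp u)" for u :: real
  have fm: "f \<in> borel_measurable borel" unfolding f_def by measurable
  have "ennreal (Gamma s) = (\<integral>\<^sup>+u. f u \<partial>lborel)" unfolding f_def by (rule Gamma_conv_nn_integral_real[OF s])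
  also have "\<dots> = ennreal \<bar>c\<bar> * (\<integral>\<^sup>+x. f (0 + c * x) \<partial>lborel)"
    using nn_integral_real_affine[OF fm, of c 0] c by simp
  also have "(\<integral>\<^sup>+x. f (0 + c * x) \<partial>lborel) = (\<integral>\<^sup>+x. ennreal (c powr (s - 1)) * ennreal (if x > 0 then x powr (s - 1) * exp (- (c * x)) else 0) \<partial>lborel)"
  proof (intro nn_integral_cong)
    fix x :: real
    show "f (0 + c * x) = ennreal (c powr (s - 1)) * ennreal (if x > 0 then x powr (s - 1) * exp (- (c * x)) else 0)"
    proof (cases "x > 0")
      case True
      thus ?thesis using c by (simp add: f_def powr_mult exp_minus divide_simps ennreal_mult' flip: ennreal_mult)
    next
      case False
      hence "x = 0 \<or> x < 0" by linarith
      hence "x = 0 \<or> c * x < 0" using c by (auto simp: mult_pos_neg)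
      thus ?thesis using False by (auto simp: f_def)
    qed
  qed
  also have "\<dots> = ennreal (c powr (s - 1)) * J" unfolding J_def by (rule nn_integral_cmult) measurable
  finally have eq: "ennreal (Gamma s) = ennreal (c powr s) * J"
    using c by (simp add: mult.assoc[symmetric] ennreal_mult'[symmetric] powr_diff powr_one)
  have "ennreal (1 / c powr s) * ennreal (c powr s) = 1"
    using c by (simp flip: ennreal_mult)
  hence "J = ennreal (1 / c powr s) * ennreal (Gamma s)"
    unfolding eq by (simp add: mult.assoc[symmetric])
  thus ?thesis unfolding J_def using c by (simp flip: ennreal_mult add: Gamma_real_pos[OF s, THEN less_imp_le])
qed

context setting begin

lemma gH_eq: assumes "t > 0" shows "gH \<kappa> H t = t powr (\<kappa> - 1) / Gamma \<kappa> * Lr t"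
proof -
  have "gH \<kappa> H t = (\<integral>l. t powr (\<kappa> - 1) / Gamma \<kappa> * (if 0 < l then l powr \<kappa> * exp (- (l * t)) else 0) \<partial>H)"
    unfolding gH_def
  proof (rule integral_cong_AE)
    show "(\<lambda>l. l powr \<kappa> / Gamma \<kappa> * t powr (\<kappa> - 1) * exp (- l * t)) \<in> borel_measurable H"
      unfolding measH by measurable
    show "(\<lambda>l. t powr (\<kappa> - 1) / Gamma \<kappa> * (if 0 < l then l powr \<kappa> * exp (- (l * t)) else 0)) \<in> borel_measurable H"
      unfolding measH by measurable
    show "AE l in H. l powr \<kappa> / Gamma \<kappa> * t powr (\<kappa> - 1) * exp (- l * t) = t powr (\<kappa> - 1) / Gamma \<kappa> * (if 0 < l then l powr \<kappa> * exp (- (l * t)) else 0)"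
      using AE_pos by eventually_elim auto
  qed
  also have "\<dots> = t powr (\<kappa> - 1) / Gamma \<kappa> * Lr t" unfolding Lr_def by simp
  finally show ?thesis .
qed

lemma Gk_pos: "Gamma \<kappa> > 0" using Gamma_real_pos[OF kpos] .

lemma gH_pos: assumes "t > 0" shows "gH \<kappa> H t > 0"
  using gH_eq[OF assms] Lr_pos[OF assms] Gk_pos assms by simp

lemma gH_cont: "continuous_on {0<..} (gH \<kappa> H)"
proof -
  have "continuous_on {0<..} (\<lambda>t. t powr (\<kappa> - 1) / Gamma \<kappa> * Lr t)"
    by (intro continuous_intros Lr_cont) (use Gk_pos in auto)
  thus ?thesis by (rule continuous_on_cong[THEN iffD1, rotated 2]) (auto simp: gH_eq)
qed

definition q :: "nat \<Rightarrow> real \<Rightarrow> real" where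
  "q x t = (if t > 0 then gH \<kappa> H t * pois t x else 0)"

lemma pois_pos: "t > 0 \<Longrightarrow> pois t x > 0" by (simp add: pois_def)

lemma q_nonneg: "q x t \<ge> 0"
  using gH_pos pois_pos by (auto simp: q_def intro!: mult_nonneg_nonneg less_imp_le)

lemma q_pos: "t > 0 \<Longrightarrow> q x t > 0"
  using gH_pos pois_pos by (auto simp: q_def)

lemma q_meas[measurable]: "q x \<in> borel_measurable borel"
proof -
  have "(\<lambda>t. if t \<in> {0<..} then gH \<kappa> H t * pois t x else 0) \<in> borel_measurable borel"
    by (rule borel_measurable_continuous_on_if)
       (auto intro!: continuous_intros continuous_on_mult gH_cont simp: pois_def)
  thus ?thesis by (simp add: q_def[abs_def])
qed

lemma q_meas_lborel[measurable]: "q x \<in> borel_measurable lborel"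
  using q_meas by simp

lemma GT:
  fixes n :: nat and c0 :: real assumes c0: "c0 \<ge> 0"
  shows "(\<integral>\<^sup>+t. ennreal (if t > 0 then gH \<kappa> H t * t ^ n * exp (- (c0 * t)) else 0) \<partial>lborel)
       = (\<integral>\<^sup>+l. ennreal (if l > 0 then l powr \<kappa> / Gamma \<kappa> * (Gamma (\<kappa> + n) / (l + c0) powr (\<kappa> + n)) else 0) \<partial>H)"
proof -
  interpret Hf: finite_measure H by (rule finH)
  interpret P: pair_sigma_finite H lborel
    by (rule pair_sigma_finite.intro[OF Hf.sigma_finite_measure_axioms lborel.sigma_finite_measure_axioms])
  define F where "F p = ennreal (if snd p > 0 \<and> fst p > 0 then snd p powr (\<kappa> - 1) / Gamma \<kappa> * snd p ^ n * exp (- (c0 * snd p)) * (fst p powr \<kappa> * exp (- (fst p * snd p))) else 0)" for p :: "real \<times> real"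
  have Fm: "F \<in> borel_measurable (H \<Otimes>\<^sub>M lborel)"
  proof -
    have eq: "measurable (H \<Otimes>\<^sub>M lborel) borel = measurable (borel \<Otimes>\<^sub>M borel) borel"
      by (intro measurable_cong_sets sets_pair_measure_cong sH sets_lborel refl)
    show ?thesis unfolding eq unfolding F_def by measurable
  qed
  have inner: "ennreal (if t > 0 then gH \<kappa> H t * t ^ n * exp (- (c0 * t)) else 0) = (\<integral>\<^sup>+l. F (l, t) \<partial>H)" for t
  proof (cases "t > 0")
    case True
    define A where "A = t powr (\<kappa> - 1) / Gamma \<kappa> * t ^ n * exp (- (c0 * t))"
    have A: "A \<ge> 0" unfolding A_def using Gk_pos True by simp
    have "ennreal (if t > 0 then gH \<kappa> H t * t ^ n * exp (- (c0 * t)) else 0) = ennreal A * ennreal (Lr t)"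
      using True A Lr_nonneg by (simp add: gH_eq A_def ennreal_mult'[symmetric] mult_ac)
    also have "ennreal (Lr t) = (\<integral>\<^sup>+l. ennreal (if 0 < l then l powr \<kappa> * exp (- (l * t)) else 0) \<partial>H)"
      unfolding Lr_def by (rule nn_integral_eq_integral[symmetric]) (use Lr_integrable[OF True] in auto)
    also have "ennreal A * \<dots> = (\<integral>\<^sup>+l. ennreal A * ennreal (if 0 < l then l powr \<kappa> * exp (- (l * t)) else 0) \<partial>H)"
      by (rule nn_integral_cmult[symmetric]) (simp add: measH)
    also have "\<dots> = (\<integral>\<^sup>+l. F (l, t) \<partial>H)"
      by (intro nn_integral_cong) (use True A in \<open>auto simp: F_def A_def ennreal_mult'[symmetric] mult_ac\<close>)
    finally show ?thesis .
  qed (simp add: F_def)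
  have inner2: "(\<integral>\<^sup>+t. F (l, t) \<partial>lborel) = ennreal (if l > 0 then l powr \<kappa> / Gamma \<kappa> * (Gamma (\<kappa> + n) / (l + c0) powr (\<kappa> + n)) else 0)" for l
  proof (cases "l > 0")
    case True
    have lc: "l + c0 > 0" using True c0 by simp
    have "(\<integral>\<^sup>+t. F (l, t) \<partial>lborel) = (\<integral>\<^sup>+t. ennreal (l powr \<kappa> / Gamma \<kappa>) * ennreal (if t > 0 then t powr ((\<kappa> + n) - 1) * exp (- ((l + c0) * t)) else 0) \<partial>lborel)"
    proof (intro nn_integral_cong)
      fix t :: real
      show "F (l, t) = ennreal (l powr \<kappa> / Gamma \<kappa>) * ennreal (if t > 0 then t powr ((\<kappa> + n) - 1) * exp (- ((l + c0) * t)) else 0)"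
      proof (cases "t > 0")
        case tp: True
        have "t powr (\<kappa> + n - 1) = t powr (\<kappa> - 1) * t ^ n"
          using tp by (simp add: powr_add[symmetric] powr_realpow[symmetric] algebra_simps)
        moreover have "exp (- ((l + c0) * t)) = exp (- (c0 * t)) * exp (- (l * t))"
          by (simp add: algebra_simps flip: exp_add)
        ultimately show ?thesis using tp True Gk_pos
          by (simp add: F_def ennreal_mult'[symmetric] mult_ac)
      qed (simp add: F_def)
    qed
    also have "\<dots> = ennreal (l powr \<kappa> / Gamma \<kappa>) * ennreal (Gamma (\<kappa> + n) / (l + c0) powr (\<kappa> + n))"
      by (subst nn_integral_cmult) (simp_all add: Gamma_scaled[OF _ lc] kpos add_pos_nonneg)
    finally show ?thesis using True Gk_pos by (simp add: ennreal_mult'[symmetric])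
  qed (simp add: F_def)
  have "(\<integral>\<^sup>+t. ennreal (if t > 0 then gH \<kappa> H t * t ^ n * exp (- (c0 * t)) else 0) \<partial>lborel)
      = (\<integral>\<^sup>+t. (\<integral>\<^sup>+l. F (l, t) \<partial>H) \<partial>lborel)" by (simp only: inner)
  also have "\<dots> = (\<integral>\<^sup>+l. (\<integral>\<^sup>+t. F (l, t) \<partial>lborel) \<partial>H)" by (rule P.Fubini'[of "\<lambda>l t. F (l, t)"]) (use Fm in simp)
  also have "\<dots> = (\<integral>\<^sup>+l. ennreal (if l > 0 then l powr \<kappa> / Gamma \<kappa> * (Gamma (\<kappa> + n) / (l + c0) powr (\<kappa> + n)) else 0) \<partial>H)"
    by (simp only: inner2)
  finally show ?thesis .
qed

definition fI :: "nat \<Rightarrow> real \<Rightarrow> real" where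
  "fI x l = Gamma (real x + \<kappa>) / (fact x * Gamma \<kappa>) * (1 / (l + 1)) ^ x * (l / (l + 1)) powr \<kappa>"

lemma fH_fI: "fH \<kappa> H x = (\<integral>l. fI x l \<partial>H)"
  unfolding fH_def fI_def ..

lemma fI_meas: "fI x \<in> borel_measurable H" unfolding fI_def measH by measurable

lemma fI_pos: "l > 0 \<Longrightarrow> fI x l > 0"
  unfolding fI_def using Gk_pos kpos by (auto intro!: mult_pos_pos divide_pos_pos Gamma_real_pos add_pos_nonneg)

lemma fI_integrable: "integrable H (fI x)"
proof (rule finite_measure.integrable_const_bound[OF finH, where B="Gamma (real x + \<kappa>) / (fact x * Gamma \<kappa>)"])
  show "AE l in H. norm (fI x l) \<le> Gamma (real x + \<kappa>) / (fact x * Gamma \<kappa>)"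
    using AE_pos
  proof eventually_elim
    case (elim l)
    define C where "C = Gamma (real x + \<kappa>) / (fact x * Gamma \<kappa>)"
    have C: "C > 0" unfolding C_def using Gk_pos kpos by (auto intro!: divide_pos_pos Gamma_real_pos add_pos_nonneg)
    have a: "(1 / (l + 1)) ^ x \<le> 1" "0 \<le> (1 / (l + 1)) ^ x" using elim by (auto intro!: power_le_one)
    have b: "(l / (l + 1)) powr \<kappa> \<le> 1" "0 \<le> (l / (l + 1)) powr \<kappa>" using elim kpos by (auto intro!: powr_le1)
    have "fI x l = C * ((1 / (l + 1)) ^ x * (l / (l + 1)) powr \<kappa>)" unfolding fI_def C_def by simp
    moreover have "(1 / (l + 1)) ^ x * (l / (l + 1)) powr \<kappa> \<le> 1" using a b by (intro mult_le_one) auto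
    moreover have "0 \<le> (1 / (l + 1)) ^ x * (l / (l + 1)) powr \<kappa>" using a b by simp
    ultimately show ?case using C unfolding C_def[symmetric]
      by (simp add: abs_mult mult_left_le)
  qed
  show "fI x \<in> borel_measurable H" by (rule fI_meas)
qed

lemma fH_pos: "fH \<kappa> H x > 0"
proof -
  have nn: "AE l in H. 0 \<le> fI x l" using AE_pos by eventually_elim (use fI_pos in \<open>auto intro: less_imp_le\<close>)
  have ge: "fH \<kappa> H x \<ge> 0" unfolding fH_fI by (rule integral_nonneg_AE[OF nn])
  have "fH \<kappa> H x \<noteq> 0"
  proof
    assume "fH \<kappa> H x = 0"
    hence "AE l in H. fI x l = 0"
      unfolding fH_fI using integral_nonneg_eq_0_iff_AE[OF fI_integrable nn] by simp
    with AE_pos have "AE l in H. False"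
    proof eventually_elim
      case (elim l) thus ?case using fI_pos[of l x] by simp
    qed
    thus False using prob_space.AE_False[OF prob] by simp
  qed
  thus ?thesis using ge by simp
qed

lemma gpart_meas[measurable]: "(\<lambda>t. if 0 < t then gH \<kappa> H t * t ^ n * exp (- (c * t)) else 0) \<in> borel_measurable borel"
proof -
  have "(\<lambda>t. if t \<in> {0<..} then gH \<kappa> H t * t ^ n * exp (- (c * t)) else 0) \<in> borel_measurable borel"
    by (rule borel_measurable_continuous_on_if)
       (auto intro!: continuous_intros continuous_on_mult gH_cont)
  thus ?thesis by simp
qed

lemma q_alt: "q x t = 1 / fact x * (if t > 0 then gH \<kappa> H t * t ^ x * exp (- (1 * t)) else 0)"
  by (simp add: q_def pois_def)

lemma q_int: "(\<integral>\<^sup>+t. ennreal (q x t) \<partial>lborel) = ennreal (fH \<kappa> H x)"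
proof -
  have gnn: "(if t > 0 then gH \<kappa> H t * t ^ x * exp (- (1 * t)) else 0) \<ge> 0" for t
    using gH_pos by (auto intro!: mult_nonneg_nonneg less_imp_le)
  have "(\<integral>\<^sup>+t. ennreal (q x t) \<partial>lborel) = (\<integral>\<^sup>+t. ennreal (1 / fact x) * ennreal (if t > 0 then gH \<kappa> H t * t ^ x * exp (- (1 * t)) else 0) \<partial>lborel)"
    by (intro nn_integral_cong) (simp only: q_alt, rule ennreal_mult', simp)
  also have "\<dots> = ennreal (1 / fact x) * (\<integral>\<^sup>+t. ennreal (if t > 0 then gH \<kappa> H t * t ^ x * exp (- (1 * t)) else 0) \<partial>lborel)"
    by (rule nn_integral_cmult) simp
  also have "\<dots> = ennreal (1 / fact x) * (\<integral>\<^sup>+l. ennreal (if l > 0 then l powr \<kappa> / Gamma \<kappa> * (Gamma (\<kappa> + x) / (l + 1) powr (\<kappa> + x)) else 0) \<partial>H)"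
    using GT[of 1 x] by simp
  also have "\<dots> = (\<integral>\<^sup>+l. ennreal (1 / fact x) * ennreal (if l > 0 then l powr \<kappa> / Gamma \<kappa> * (Gamma (\<kappa> + x) / (l + 1) powr (\<kappa> + x)) else 0) \<partial>H)"
    by (rule nn_integral_cmult[symmetric]) (simp add: measH)
  also have "\<dots> = (\<integral>\<^sup>+l. ennreal (fI x l) \<partial>H)"
  proof (rule nn_integral_cong_AE)
    show "AE l in H. ennreal (1 / fact x) * ennreal (if l > 0 then l powr \<kappa> / Gamma \<kappa> * (Gamma (\<kappa> + x) / (l + 1) powr (\<kappa> + x)) else 0) = ennreal (fI x l)"
      using AE_pos
    proof eventually_elim
      case (elim l)
      have l1: "l + 1 > 0" using elim by simp
      have "(1 / (l + 1)) ^ x = 1 / (l + 1) powr real x" using l1 by (simp add: powr_realpow power_one_over)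
      moreover have "(l / (l + 1)) powr \<kappa> = l powr \<kappa> / (l + 1) powr \<kappa>" using elim by (simp add: powr_divide)
      moreover have "(l + 1) powr (\<kappa> + real x) = (l + 1) powr \<kappa> * (l + 1) powr real x" by (simp add: powr_add)
      ultimately have "fI x l = 1 / fact x * (l powr \<kappa> / Gamma \<kappa> * (Gamma (\<kappa> + x) / (l + 1) powr (\<kappa> + x)))"
        unfolding fI_def using l1 Gk_pos by (simp add: field_simps add.commute)
      thus ?case using elim Gk_pos kpos
        by (simp add: ennreal_mult'[symmetric] Gamma_real_pos add_pos_nonneg)
    qed
  qed
  also have "\<dots> = ennreal (fH \<kappa> H x)"
    unfolding fH_fI
    by (rule nn_integral_eq_integral[OF fI_integrable]) (use AE_pos in \<open>eventually_elim, use fI_pos in \<open>auto intro: less_imp_le\<close>\<close>)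
  finally show ?thesis .
qed

lemma pois_sums: "(\<lambda>x. pois t x) sums 1"
proof -
  have "(\<lambda>n. t ^ n /\<^sub>R fact n) sums exp t" by (rule exp_converges)
  hence "(\<lambda>n. exp (- t) * (t ^ n /\<^sub>R fact n)) sums (exp (- t) * exp t)" by (rule sums_mult)
  thus ?thesis by (simp add: pois_def exp_minus divide_inverse mult_ac)
qed

lemma total: "(\<Sum>x. \<integral>\<^sup>+t. ennreal (q x t) \<partial>lborel) = 1"
proof -
  have "(\<Sum>x. \<integral>\<^sup>+t. ennreal (q x t) \<partial>lborel) = (\<integral>\<^sup>+t. (\<Sum>x. ennreal (q x t)) \<partial>lborel)"
    by (rule nn_integral_suminf[symmetric]) simp
  also have "\<dots> = (\<integral>\<^sup>+t. ennreal (if t > 0 then gH \<kappa> H t * t ^ 0 * exp (- (0 * t)) else 0) \<partial>lborel)"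
  proof (intro nn_integral_cong)
    fix t :: real
    show "(\<Sum>x. ennreal (q x t)) = ennreal (if t > 0 then gH \<kappa> H t * t ^ 0 * exp (- (0 * t)) else 0)"
    proof (cases "t > 0")
      case True
      have "(\<lambda>x. gH \<kappa> H t * pois t x) sums (gH \<kappa> H t * 1)" by (intro sums_mult pois_sums)
      hence "(\<lambda>x. q x t) sums gH \<kappa> H t" using True by (simp add: q_def)
      thus ?thesis by (subst suminf_ennreal_eq[OF q_nonneg \<open>(\<lambda>x. q x t) sums gH \<kappa> H t\<close>]) (use True in simp)
    qed (simp add: q_def)
  qed
  also have "\<dots> = (\<integral>\<^sup>+l. ennreal (if l > 0 then l powr \<kappa> / Gamma \<kappa> * (Gamma (\<kappa> + real 0) / (l + 0) powr (\<kappa> + real 0)) else 0) \<partial>H)"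
    by (rule GT) simp
  also have "\<dots> = (\<integral>\<^sup>+l. indicator {0<..} l \<partial>H)"
    by (intro nn_integral_cong) (use Gk_pos in \<open>auto simp: indicator_def\<close>)
  also have "\<dots> = emeasure H {0<..}" using sH by simp
  also have "\<dots> = 1" using H1 finH by (simp add: finite_measure.emeasure_eq_measure)
  finally show ?thesis .
qed

end

abbreviation JM :: "(real \<times> nat) measure" where "JM \<equiv> lborel \<Otimes>\<^sub>M count_space UNIV"

lemma JM_meas:
  fixes g :: "nat \<Rightarrow> real \<Rightarrow> 'b::topological_space"
  assumes "\<And>x. g x \<in> borel_measurable lborel"
  shows "(\<lambda>p. g (snd p) (fst p)) \<in> borel_measurable JM"
  by (rule measurable_compose_countable[where f="\<lambda>i p. g i (fst p)" and g=snd])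
     (auto intro: measurable_compose[OF measurable_fst assms])

lemma JM_set:
  assumes "\<And>x. A x \<in> sets lborel"
  shows "{(t, x). t \<in> A x} \<in> sets JM"
proof -
  have "(\<lambda>p. indicator (A (snd p)) (fst p) :: real) \<in> borel_measurable JM"
    by (rule JM_meas) (use assms in auto)
  hence "{p \<in> space JM. (indicator (A (snd p)) (fst p) :: real) = 1} \<in> sets JM" by measurable
  moreover have "{p \<in> space JM. (indicator (A (snd p)) (fst p) :: real) = 1} = {(t, x). t \<in> A x}"
    by (auto simp: indicator_def space_pair_measure)
  ultimately show ?thesis by simp
qed

lemma JM_sum:
  assumes f: "f \<in> borel_measurable JM"
  shows "integral\<^sup>N JM f = (\<Sum>x. \<integral>\<^sup>+t. f (t, x) \<partial>lborel)"
proof -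
  interpret P: pair_sigma_finite lborel "count_space (UNIV :: nat set)"
    by (rule pair_sigma_finite.intro[OF lborel.sigma_finite_measure_axioms sigma_finite_measure_count_space_countable]) simp
  have "integral\<^sup>N JM f = (\<integral>\<^sup>+x. (\<integral>\<^sup>+t. f (t, x) \<partial>lborel) \<partial>count_space UNIV)"
    by (rule P.nn_integral_snd[OF f, symmetric])
  also have "\<dots> = (\<Sum>x. \<integral>\<^sup>+t. f (t, x) \<partial>lborel)" by (rule nn_integral_count_space_nat)
  finally show ?thesis .
qed

context setting begin

lemma dens_meas: "(\<lambda>p. ennreal (q (snd p) (fst p))) \<in> borel_measurable JM"
  by (rule JM_meas) simp

lemma joint_eq: "jointH \<kappa> H = density JM (\<lambda>p. ennreal (q (snd p) (fst p)))"
  unfolding jointH_def q_def by (simp add: case_prod_beta')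

lemma sets_joint: "sets (jointH \<kappa> H) = sets JM" by (simp add: joint_eq)

lemma space_joint: "space (jointH \<kappa> H) = UNIV" by (simp add: joint_eq space_pair_measure)

lemma E1:
  assumes "\<And>x. A x \<in> sets lborel"
  shows "emeasure (jointH \<kappa> H) {(t, x). t \<in> A x} = (\<Sum>x. \<integral>\<^sup>+t. ennreal (q x t) * indicator (A x) t \<partial>lborel)"
proof -
  have S: "{(t, x). t \<in> A x} \<in> sets JM" by (rule JM_set[OF assms])
  have "emeasure (jointH \<kappa> H) {(t, x). t \<in> A x} = (\<integral>\<^sup>+p. ennreal (q (snd p) (fst p)) * indicator {(t, x). t \<in> A x} p \<partial>JM)"
    unfolding joint_eq by (rule emeasure_density[OF dens_meas S])
  also have "\<dots> = (\<Sum>x. \<integral>\<^sup>+t. ennreal (q x t) * indicator {(t, x). t \<in> A x} (t, x) \<partial>lborel)"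
  proof -
    have "(\<lambda>p. ennreal (q (snd p) (fst p)) * indicator {(t, x). t \<in> A x} p) \<in> borel_measurable JM"
      using dens_meas S by measurable
    from JM_sum[OF this] show ?thesis by simp
  qed
  also have "\<dots> = (\<Sum>x. \<integral>\<^sup>+t. ennreal (q x t) * indicator (A x) t \<partial>lborel)"
    by (simp add: indicator_def)
  finally show ?thesis .
qed

lemma E2: "exp_length \<kappa> H I = (\<Sum>x. emeasure lborel (I x) * ennreal (fH \<kappa> H x))"
proof -
  have m: "(\<lambda>p. emeasure lborel (I (snd p))) \<in> borel_measurable JM"
    by (rule JM_meas[where g="\<lambda>x t. emeasure lborel (I x)"]) simp
  have "exp_length \<kappa> H I = (\<integral>\<^sup>+p. emeasure lborel (I (snd p)) \<partial>jointH \<kappa> H)"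
    unfolding exp_length_def by (simp add: case_prod_beta')
  also have "\<dots> = (\<integral>\<^sup>+p. ennreal (q (snd p) (fst p)) * emeasure lborel (I (snd p)) \<partial>JM)"
    unfolding joint_eq by (rule nn_integral_density[OF dens_meas m])
  also have "\<dots> = (\<Sum>x. \<integral>\<^sup>+t. ennreal (q x t) * emeasure lborel (I x) \<partial>lborel)"
  proof -
    have "(\<lambda>p. ennreal (q (snd p) (fst p)) * emeasure lborel (I (snd p))) \<in> borel_measurable JM"
      using dens_meas m by measurable
    from JM_sum[OF this] show ?thesis by simp
  qed
  also have "\<dots> = (\<Sum>x. emeasure lborel (I x) * ennreal (fH \<kappa> H x))"
    by (subst nn_integral_multc) (simp_all add: q_int mult.commute)
  finally show ?thesis .
qed

lemma joint_total: "emeasure (jointH \<kappa> H) (space (jointH \<kappa> H)) = 1"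
proof -
  have "space (jointH \<kappa> H) = {(t, x). t \<in> (\<lambda>_. UNIV) x}" by (simp add: space_joint)
  hence "emeasure (jointH \<kappa> H) (space (jointH \<kappa> H)) = (\<Sum>x. \<integral>\<^sup>+t. ennreal (q x t) * indicator UNIV t \<partial>lborel)"
    using E1[of "\<lambda>_. UNIV"] by simp
  also have "\<dots> = 1" using total by simp
  finally show ?thesis .
qed

lemma joint_prob: "prob_space (jointH \<kappa> H)"
  by (rule prob_spaceI[OF joint_total])

lemma q_form: "t > 0 \<Longrightarrow> q x t = t powr (real x + \<kappa> - 1) * exp (- t) * Lr t / (Gamma \<kappa> * fact x)"
proof -
  assume t: "t > 0"
  have "t powr (real x + \<kappa> - 1) = t ^ x * t powr (\<kappa> - 1)"
    using t by (simp add: powr_add[symmetric] powr_realpow[symmetric] algebra_simps)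
  thus ?thesis using t by (simp add: q_def gH_eq pois_def)
qed

lemma post_eq: "t > 0 \<Longrightarrow> postH \<kappa> H x t = q x t / fH \<kappa> H x"
  by (simp add: postH_def q_def mult.commute)

lemma post_nonpos: "\<not> t > 0 \<Longrightarrow> postH \<kappa> H x t = 0"
  by (simp add: postH_def)

lemma post_pos: "t > 0 \<Longrightarrow> postH \<kappa> H x t > 0"
  using q_pos fH_pos by (simp add: post_eq)

lemma post_cont: "continuous_on {0<..} (postH \<kappa> H x)"
proof -
  have "continuous_on {0<..} (\<lambda>t. gH \<kappa> H t * pois t x / fH \<kappa> H x)"
    using fH_pos[of x] by (intro continuous_intros gH_cont) (auto simp: pois_def intro!: continuous_intros)
  thus ?thesis by (rule continuous_on_cong[THEN iffD1, rotated 2]) (auto simp: postH_def mult.commute)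
qed

lemma post_meas[measurable]: "postH \<kappa> H x \<in> borel_measurable borel"
proof -
  have "(\<lambda>t. if t \<in> {0<..} then postH \<kappa> H x t else 0) \<in> borel_measurable borel"
    by (rule borel_measurable_continuous_on_if) (auto intro!: post_cont continuous_intros)
  moreover have "(\<lambda>t. if t \<in> {0<..} then postH \<kappa> H x t else 0) = postH \<kappa> H x"
    by (auto simp: post_nonpos)
  ultimately show ?thesis by simp
qed

lemma hpd_pos:
  assumes k: "k > 0" shows "hpd_rule \<kappa> H k x = {t. t > 0 \<and> k * fH \<kappa> H x \<le> q x t}"
proof (intro set_eqI iffI)
  fix t assume "t \<in> hpd_rule \<kappa> H k x"
  hence t: "t \<ge> 0" "k \<le> postH \<kappa> H x t" by (auto simp: hpd_rule_def)
  have tp: "t > 0"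
  proof (rule ccontr)
    assume "\<not> t > 0"
    hence "postH \<kappa> H x t = 0" by (rule post_nonpos)
    with t k show False by simp
  qed
  thus "t \<in> {t. t > 0 \<and> k * fH \<kappa> H x \<le> q x t}" using t fH_pos[of x] by (simp add: post_eq pos_le_divide_eq)
next
  fix t assume "t \<in> {t. t > 0 \<and> k * fH \<kappa> H x \<le> q x t}"
  thus "t \<in> hpd_rule \<kappa> H k x" using fH_pos[of x] by (simp add: hpd_rule_def post_eq pos_le_divide_eq)
qed

lemma hpd_zero: "hpd_rule \<kappa> H 0 x = {0..}"
  using post_pos[of _ x] post_nonpos[of _ x] by (force simp: hpd_rule_def less_le)

lemma hpd_sets[measurable]: "hpd_rule \<kappa> H k x \<in> sets lborel"
  unfolding hpd_rule_def by simp

lemma level_x: "k > 0 \<Longrightarrow> {t. t > 0 \<and> postH \<kappa> H x t = k} \<in> null_sets lborel"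
proof -
  assume k: "k > 0"
  have "{t. t > 0 \<and> postH \<kappa> H x t = k} = {t. t > 0 \<and> t powr (real x + \<kappa> - 1) * exp (- t) * Lr t = k * fH \<kappa> H x * (Gamma \<kappa> * fact x)}"
    using fH_pos[of x] Gk_pos by (auto simp: post_eq q_form field_simps)
  moreover have "k * fH \<kappa> H x * (Gamma \<kappa> * fact x) > 0" using k fH_pos[of x] Gk_pos by simp
  ultimately show ?thesis using level_null by simp
qed

lemma post_tail: "c > 0 \<Longrightarrow> \<forall>\<^sub>F t in at_top. postH \<kappa> H x t < c"
proof -
  assume c: "c > 0"
  have cp: "c * fH \<kappa> H x * (Gamma \<kappa> * fact x) > 0" using c fH_pos[of x] Gk_pos by simp
  have "\<forall>\<^sub>F t in at_top. t powr (real x + \<kappa> - 1) * exp (- t) * Lr t < c * fH \<kappa> H x * (Gamma \<kappa> * fact x) \<and> t > 0"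
    using tail_small[OF cp, of "real x + \<kappa> - 1"] eventually_gt_at_top[of 0]
    by eventually_elim auto
  thus ?thesis
    by eventually_elim (use fH_pos[of x] Gk_pos in \<open>auto simp: post_eq q_form field_simps\<close>)
qed

lemma POS:
  assumes A: "A \<in> sets borel" "A \<subseteq> {0<..}" and z: "(\<integral>\<^sup>+t. ennreal (q x t) * indicator A t \<partial>lborel) = 0"
  shows "A \<in> null_sets lborel"
proof -
  have "AE t in lborel. ennreal (q x t) * indicator A t = 0"
    using z by (subst (asm) nn_integral_0_iff_AE) (use A in auto)
  hence "AE t in lborel. t \<notin> A"
  proof eventually_elim
    case (elim t)
    show ?case
    proof
      assume tA: "t \<in> A"
      hence "q x t > 0" using A q_pos by auto
      with elim tA show False by (simp add: indicator_def)
    qed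
  qed
  thus ?thesis using A by (subst AE_iff_null_sets) auto
qed

definition S :: "real \<Rightarrow> (real \<times> nat) set" where "S k = {(t, x). t \<in> hpd_rule \<kappa> H k x}"

lemma S_sets: "S k \<in> sets (jointH \<kappa> H)"
  unfolding S_def sets_joint by (rule JM_set, rule hpd_sets)

lemma S_mono: "k \<le> k' \<Longrightarrow> S k' \<subseteq> S k"
  by (auto simp: S_def hpd_rule_def)

lemma cov_S: "coverage \<kappa> H (hpd_rule \<kappa> H k) = measure (jointH \<kappa> H) (S k)"
  by (simp add: coverage_def S_def)

lemma C0: "measure (jointH \<kappa> H) (S 0) = 1"
proof -
  have "emeasure (jointH \<kappa> H) (S 0) = (\<Sum>x. \<integral>\<^sup>+t. ennreal (q x t) * indicator {0..} t \<partial>lborel)"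
    unfolding S_def hpd_zero by (rule E1) simp
  also have "\<dots> = (\<Sum>x. \<integral>\<^sup>+t. ennreal (q x t) \<partial>lborel)"
    by (intro suminf_cong nn_integral_cong) (auto simp: indicator_def q_def)
  also have "\<dots> = 1" by (rule total)
  finally show ?thesis by (simp add: measure_def)
qed

lemma Lnull: "k \<ge> 0 \<Longrightarrow> {(t, x). t \<in> {t. t \<ge> 0 \<and> postH \<kappa> H x t = k}} \<in> null_sets (jointH \<kappa> H)"
proof -
  assume k: "k \<ge> 0"
  have "emeasure (jointH \<kappa> H) {(t, x). t \<in> {t. t \<ge> 0 \<and> postH \<kappa> H x t = k}} = (\<Sum>x. \<integral>\<^sup>+t. ennreal (q x t) * indicator {t. t \<ge> 0 \<and> postH \<kappa> H x t = k} t \<partial>lborel)"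
    by (rule E1) simp
  also have "\<dots> = (\<Sum>x. 0)"
  proof (intro suminf_cong)
    fix x
    have N: "{t. t > 0 \<and> postH \<kappa> H x t = k} \<in> null_sets lborel"
    proof (cases "k > 0")
      case True thus ?thesis by (rule level_x)
    next
      case False
      hence e: "{t. t > 0 \<and> postH \<kappa> H x t = k} = {}" using k post_pos[of _ x] by force
      show ?thesis unfolding e by simp
    qed
    have "AE t in lborel. ennreal (q x t) * indicator {t. t \<ge> 0 \<and> postH \<kappa> H x t = k} t = 0"
      by (rule AE_I'[OF N]) (auto simp: indicator_def q_def)
    from nn_integral_cong_AE[OF this]
    show "(\<integral>\<^sup>+t. ennreal (q x t) * indicator {t. t \<ge> 0 \<and> postH \<kappa> H x t = k} t \<partial>lborel) = 0" by simp
  qed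
  finally have "emeasure (jointH \<kappa> H) {(t, x). t \<in> {t. t \<ge> 0 \<and> postH \<kappa> H x t = k}} = 0" by simp
  moreover have "{(t, x). t \<in> {t. t \<ge> 0 \<and> postH \<kappa> H x t = k}} \<in> sets (jointH \<kappa> H)"
    unfolding sets_joint by (rule JM_set) simp
  ultimately show ?thesis by (rule null_setsI)
qed

lemma S_events: "S k \<in> sets (jointH \<kappa> H)" by (rule S_sets)

lemma C_mono: "k \<le> k' \<Longrightarrow> measure (jointH \<kappa> H) (S k') \<le> measure (jointH \<kappa> H) (S k)"
proof -
  assume "k \<le> k'"
  interpret J: prob_space "jointH \<kappa> H" by (rule joint_prob)
  show ?thesis by (rule J.finite_measure_mono[OF S_mono[OF \<open>k \<le> k'\<close>] S_sets])
qed

lemma exists_k: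
  assumes b: "0 < \<beta>" "\<beta> < 1"
  shows "\<exists>k\<ge>0. measure (jointH \<kappa> H) (S k) = 1 - \<beta>"
proof -
  interpret J: prob_space "jointH \<kappa> H" by (rule joint_prob)
  define C where "C k = measure (jointH \<kappa> H) (S k)" for k
  have Sev: "range (\<lambda>n. S (f n)) \<subseteq> J.events" for f using S_sets by auto
  obtain N :: nat where N: "C (real N) < 1 - \<beta>"
  proof -
    have "decseq (\<lambda>n. S (real n))" by (intro monotoneI S_mono) simp
    from J.finite_Lim_measure_decseq[OF Sev this]
    have lim: "(\<lambda>n. C (real n)) \<longlonglongrightarrow> measure (jointH \<kappa> H) (\<Inter>n. S (real n))" by (simp add: C_def)
    have "(\<Inter>n. S (real n)) = {}"
    proof (safe)
      fix t x assume "(t, x) \<in> (\<Inter>n. S (real n))"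
      hence "postH \<kappa> H x t \<ge> real n" for n by (auto simp: S_def hpd_rule_def)
      moreover obtain n :: nat where "postH \<kappa> H x t < real n" using reals_Archimedean2 by blast
      ultimately show "(t, x) \<in> {}" by (meson not_le)
    qed
    with lim have "(\<lambda>n. C (real n)) \<longlonglongrightarrow> 0" by simp
    from order_tendstoD(2)[OF this, of "1 - \<beta>"] b obtain n where "C (real n) < 1 - \<beta>"
      by (auto simp: eventually_sequentially)
    thus ?thesis using that by blast
  qed
  define P where "P = {k. k \<ge> 0 \<and> C k \<ge> 1 - \<beta>}"
  have C0': "C 0 = 1" using C0 by (simp add: C_def)
  have P0: "0 \<in> P" using C0' b by (simp add: P_def)
  have Pb: "k \<le> real N" if "k \<in> P" for k
  proof (rule ccontr)
    assume "\<not> k \<le> real N"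
    hence "C k \<le> C (real N)" unfolding C_def by (intro C_mono) simp
    with N that show False by (simp add: P_def)
  qed
  hence bdd: "bdd_above P" by (meson bdd_above.unfold)
  define ks where "ks = Sup P"
  have ks0: "ks \<ge> 0" unfolding ks_def using P0 bdd by (rule cSup_upper)
  have Pne: "P \<noteq> {}" using P0 by auto
  have A: "C ks \<ge> 1 - \<beta>"
  proof (cases "ks = 0")
    case True thus ?thesis using C0' b by simp
  next
    case False
    hence ksp: "ks > 0" using ks0 by simp
    define a where "a n = ks - ks * inverse (real (Suc n))" for n
    have a_lt: "a n < ks" for n using ksp by (simp add: a_def)
    have a_ge: "a n \<ge> 0" for n
    proof -
      have "ks * inverse (real (Suc n)) \<le> ks * 1" using ksp by (intro mult_left_mono) (auto simp: field_simps)
      thus ?thesis by (simp add: a_def)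
    qed
    have a_inc: "a m \<le> a n" if "m \<le> n" for m n
    proof -
      have "inverse (real (Suc n)) \<le> inverse (real (Suc m))" using that by (simp add: field_simps)
      hence "ks * inverse (real (Suc n)) \<le> ks * inverse (real (Suc m))" using ksp by (intro mult_left_mono) auto
      thus ?thesis by (simp add: a_def)
    qed
    have a_lim: "a \<longlonglongrightarrow> ks"
    proof -
      have "(\<lambda>n. ks - ks * inverse (real (Suc n))) \<longlonglongrightarrow> ks - ks * 0"
        by (intro tendsto_intros LIMSEQ_inverse_real_of_nat)
      thus ?thesis by (simp add: a_def[abs_def])
    qed
    have "decseq (\<lambda>n. S (a n))" by (intro monotoneI S_mono a_inc) simp
    from J.finite_Lim_measure_decseq[OF Sev this]
    have lim: "(\<lambda>n. C (a n)) \<longlonglongrightarrow> measure (jointH \<kappa> H) (\<Inter>n. S (a n))" by (simp add: C_def)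
    have "(\<Inter>n. S (a n)) = S ks"
    proof
      show "S ks \<subseteq> (\<Inter>n. S (a n))" using S_mono[OF less_imp_le[OF a_lt]] by blast
      show "(\<Inter>n. S (a n)) \<subseteq> S ks"
      proof (safe)
        fix t x assume "(t, x) \<in> (\<Inter>n. S (a n))"
        hence h: "t \<ge> 0" "\<And>n. a n \<le> postH \<kappa> H x t" by (auto simp: S_def hpd_rule_def)
        have "ks \<le> postH \<kappa> H x t" by (rule LIMSEQ_le_const2[OF a_lim]) (use h in auto)
        thus "(t, x) \<in> S ks" using h by (simp add: S_def hpd_rule_def)
      qed
    qed
    hence lim2: "(\<lambda>n. C (a n)) \<longlonglongrightarrow> C ks" using lim by (simp add: C_def)
    have "C (a n) \<ge> 1 - \<beta>" for n
    proof -
      have "a n < Sup P" using a_lt by (simp add: ks_def)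
      then obtain p where p: "p \<in> P" "a n < p" using less_cSup_iff[OF Pne bdd] by blast
      have "C p \<le> C (a n)" unfolding C_def by (rule C_mono) (use p in simp)
      thus ?thesis using p by (simp add: P_def)
    qed
    thus ?thesis by (intro LIMSEQ_le_const[OF lim2]) auto
  qed
  have B: "C ks \<le> 1 - \<beta>"
  proof -
    define b where "b n = ks + inverse (real (Suc n))" for n
    have b_gt: "b n > ks" for n by (simp add: b_def)
    have b_dec: "b n \<le> b m" if "m \<le> n" for m n using that by (simp add: b_def field_simps)
    have Cb: "C (b n) < 1 - \<beta>" for n
    proof (rule ccontr)
      assume "\<not> C (b n) < 1 - \<beta>"
      hence "b n \<in> P" using ks0 b_gt[of n] by (simp add: P_def)
      hence "b n \<le> ks" unfolding ks_def using bdd by (rule cSup_upper)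
      thus False using b_gt[of n] by simp
    qed
    define S' where "S' = {(t, x). t \<in> {t. t \<ge> 0 \<and> ks < postH \<kappa> H x t}}"
    have S'sets: "S' \<in> sets (jointH \<kappa> H)" unfolding S'_def sets_joint by (rule JM_set) simp
    have "incseq (\<lambda>n. S (b n))" by (intro monotoneI S_mono b_dec) simp
    from J.finite_Lim_measure_incseq[OF Sev this]
    have lim: "(\<lambda>n. C (b n)) \<longlonglongrightarrow> measure (jointH \<kappa> H) (\<Union>n. S (b n))" by (simp add: C_def)
    have "(\<Union>n. S (b n)) = S'"
    proof
      show "(\<Union>n. S (b n)) \<subseteq> S'"
      proof
        fix p assume "p \<in> (\<Union>n. S (b n))"
        then obtain n where "p \<in> S (b n)" by blast
        then obtain t x where p: "p = (t, x)" "t \<ge> 0" "b n \<le> postH \<kappa> H x t" by (auto simp: S_def hpd_rule_def)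
        thus "p \<in> S'" using b_gt[of n] by (auto simp: S'_def)
      qed
      show "S' \<subseteq> (\<Union>n. S (b n))"
      proof (safe)
        fix t x assume "(t, x) \<in> S'"
        hence h: "t \<ge> 0" "ks < postH \<kappa> H x t" by (auto simp: S'_def)
        obtain n where "inverse (real (Suc n)) < postH \<kappa> H x t - ks" using reals_Archimedean[of "postH \<kappa> H x t - ks"] h(2) by auto
        hence "(t, x) \<in> S (b n)" using h by (simp add: S_def hpd_rule_def b_def)
        thus "(t, x) \<in> (\<Union>n. S (b n))" by blast
      qed
    qed
    with lim have "(\<lambda>n. C (b n)) \<longlonglongrightarrow> measure (jointH \<kappa> H) S'" by simp
    hence mS': "measure (jointH \<kappa> H) S' \<le> 1 - \<beta>"
      by (rule LIMSEQ_le_const2) (use Cb in \<open>auto intro: less_imp_le\<close>)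
    have eq: "S ks = S' \<union> {(t, x). t \<in> {t. t \<ge> 0 \<and> postH \<kappa> H x t = ks}}"
      by (auto simp: S_def S'_def hpd_rule_def)
    have "C ks = measure (jointH \<kappa> H) (S' \<union> {(t, x). t \<in> {t. t \<ge> 0 \<and> postH \<kappa> H x t = ks}})"
      unfolding C_def by (simp only: eq)
    also have "\<dots> = measure (jointH \<kappa> H) S'" by (rule measure_Un_null_set[OF S'sets Lnull[OF ks0]])
    finally have "C ks = measure (jointH \<kappa> H) S'" .
    thus ?thesis using mS' by simp
  qed
  show ?thesis using A B ks0 by (auto simp: C_def)
qed

end

context setting begin

lemma hpd_sets_borel[simp, measurable]: "hpd_rule \<kappa> H k x \<in> sets borel"
  using hpd_sets[of k x] by simp

lemma emeasure_S: "emeasure (jointH \<kappa> H) (S k) = (\<Sum>x. \<integral>\<^sup>+t. ennreal (q x t) * indicator (hpd_rule \<kappa> H k x) t \<partial>lborel)"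
  unfolding S_def by (rule E1) simp

lemma uniq_aux:
  assumes k: "0 \<le> k1" "k1 < k2" and eq: "measure (jointH \<kappa> H) (S k1) = measure (jointH \<kappa> H) (S k2)"
    and lt: "measure (jointH \<kappa> H) (S k1) < 1" and gt: "measure (jointH \<kappa> H) (S k1) > 0"
  shows False
proof -
  interpret J: prob_space "jointH \<kappa> H" by (rule joint_prob)
  have k1p: "k1 > 0"
  proof (rule ccontr)
    assume "\<not> k1 > 0" hence "k1 = 0" using k by simp
    thus False using lt C0 by simp
  qed
  define D where "D x = hpd_rule \<kappa> H k1 x - hpd_rule \<kappa> H k2 x" for x
  have "measure (jointH \<kappa> H) (S k1 - S k2) = 0"
    using J.finite_measure_Diff[OF S_sets S_sets S_mono[OF less_imp_le[OF k(2)]]] eq by simp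
  hence "emeasure (jointH \<kappa> H) (S k1 - S k2) = 0" by (simp add: J.emeasure_eq_measure)
  moreover have "S k1 - S k2 = {(t, x). t \<in> D x}" by (auto simp: S_def D_def)
  moreover have Dsets: "\<And>x. D x \<in> sets lborel" unfolding D_def by (intro sets.Diff hpd_sets)
  ultimately have "(\<Sum>x. \<integral>\<^sup>+t. ennreal (q x t) * indicator (D x) t \<partial>lborel) = 0"
    using E1[of D, OF Dsets] by simp
  hence Dz: "(\<integral>\<^sup>+t. ennreal (q x t) * indicator (D x) t \<partial>lborel) = 0" for x
    by (subst (asm) suminf_eq_zero_iff) auto
  have "emeasure (jointH \<kappa> H) (S k1) \<noteq> 0" using gt by (simp add: J.emeasure_eq_measure)
  then obtain x where x: "(\<integral>\<^sup>+t. ennreal (q x t) * indicator (hpd_rule \<kappa> H k1 x) t \<partial>lborel) \<noteq> 0"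
    unfolding emeasure_S by (metis (no_types, lifting) suminf_eq_zero_iff summableI zero_le)
  obtain t1 where t1: "t1 > 0" "postH \<kappa> H x t1 > k1"
  proof (rule ccontr)
    assume "\<not> thesis"
    hence no: "\<And>t. t > 0 \<Longrightarrow> postH \<kappa> H x t \<le> k1" using that by (meson not_le)
    have N: "{t. t > 0 \<and> postH \<kappa> H x t = k1} \<in> null_sets lborel" by (rule level_x[OF k1p])
    have "AE t in lborel. ennreal (q x t) * indicator (hpd_rule \<kappa> H k1 x) t = 0"
      by (rule AE_I'[OF N]) (use no in \<open>auto simp: hpd_pos[OF k1p] indicator_def fH_pos post_eq pos_le_divide_eq intro: antisym\<close>)
    from nn_integral_cong_AE[OF this] x show False by simp
  qed
  obtain t2 where t2: "t2 \<ge> t1" "postH \<kappa> H x t2 < k1"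
  proof -
    have "\<forall>\<^sub>F t in at_top. postH \<kappa> H x t < k1 \<and> t \<ge> t1"
      using post_tail[OF k1p, of x] eventually_ge_at_top[of t1] by eventually_elim auto
    then obtain t where "postH \<kappa> H x t < k1 \<and> t \<ge> t1"
      using eventually_happens'[OF trivial_limit_at_top_linorder] by blast
    thus ?thesis using that by blast
  qed
  define v where "v = (k1 + min (postH \<kappa> H x t1) k2) / 2"
  have v: "k1 < v" "v < k2" "v < postH \<kappa> H x t1" using t1 k by (auto simp: v_def)
  have cont: "continuous_on {t1..t2} (postH \<kappa> H x)"
    by (rule continuous_on_subset[OF post_cont]) (use t1 in auto)
  obtain t' where t': "t1 \<le> t'" "t' \<le> t2" "postH \<kappa> H x t' = v"
    using IVT2'[of "postH \<kappa> H x" t2 v t1, OF _ _ t2(1) cont] t2 v by auto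
  define Ob where "Ob = {0<..} \<inter> postH \<kappa> H x -` {k1<..<k2}"
  have Oopen: "open Ob" unfolding Ob_def by (rule continuous_open_preimage[OF post_cont]) auto
  have t'O: "t' \<in> Ob" using t' t1 v by (auto simp: Ob_def)
  obtain e where e: "e > 0" "ball t' e \<subseteq> Ob" using Oopen t'O by (meson openE)
  have OD: "Ob \<subseteq> D x" by (auto simp: Ob_def D_def hpd_rule_def)
  have "(\<integral>\<^sup>+t. ennreal (q x t) * indicator (ball t' e) t \<partial>lborel) \<le> (\<integral>\<^sup>+t. ennreal (q x t) * indicator (D x) t \<partial>lborel)"
    using e OD by (intro nn_integral_mono mult_left_mono) (auto simp: indicator_def)
  hence "(\<integral>\<^sup>+t. ennreal (q x t) * indicator (ball t' e) t \<partial>lborel) = 0" using Dz[of x] by simp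
  hence "ball t' e \<in> null_sets lborel" by (rule POS[rotated 2]) (use e in \<open>auto simp: Ob_def\<close>)
  moreover have "emeasure lborel (ball t' e) = ennreal (2 * e)"
    using e by (simp add: ball_eq_greaterThanLessThan)
  ultimately show False using e(1) by (metis (mono_tags, lifting) ennreal_eq_0_iff mem_Collect_eq null_sets_def mult_pos_pos zero_less_numeral not_le)
qed

definition Nu :: "nat \<Rightarrow> real measure" where "Nu x = density lborel (\<lambda>t. ennreal (q x t))"

lemma Nu_eq: "X \<in> sets lborel \<Longrightarrow> emeasure (Nu x) X = (\<integral>\<^sup>+t. ennreal (q x t) * indicator X t \<partial>lborel)"
  unfolding Nu_def by (rule emeasure_density) simp_all

lemma sets_Nu[simp]: "sets (Nu x) = sets lborel" by (simp add: Nu_def)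

definition s1 :: "real \<Rightarrow> nat \<Rightarrow> real set \<Rightarrow> ennreal" where
  "s1 k x A = (\<integral>\<^sup>+t. ennreal (k * fH \<kappa> H x - q x t) * indicator (A - hpd_rule \<kappa> H k x) t \<partial>lborel)"

definition s2 :: "real \<Rightarrow> nat \<Rightarrow> real set \<Rightarrow> ennreal" where
  "s2 k x A = (\<integral>\<^sup>+t. ennreal (q x t - k * fH \<kappa> H x) * indicator (hpd_rule \<kappa> H k x - A) t \<partial>lborel)"

lemma perx:
  assumes k: "k > 0" and A: "A \<in> sets lborel" "A \<subseteq> {0<..}"
  shows "ennreal (k * fH \<kappa> H x) * emeasure lborel A + emeasure (Nu x) (hpd_rule \<kappa> H k x)
       = ennreal (k * fH \<kappa> H x) * emeasure lborel (hpd_rule \<kappa> H k x) + emeasure (Nu x) A + s1 k x A + s2 k x A"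
proof -
  define B where "B = hpd_rule \<kappa> H k x"
  define c where "c = ennreal (k * fH \<kappa> H x)"
  define w where "w = fH \<kappa> H x"
  have w: "w > 0" using fH_pos by (simp add: w_def)
  have Bs: "B \<in> sets lborel" by (simp add: B_def)
  have B: "B = {t. t > 0 \<and> k * w \<le> q x t}" unfolding B_def w_def by (rule hpd_pos[OF k])
  have As: "A \<in> sets borel" using A by simp
  have Bs': "B \<in> sets borel" using Bs by simp
  have a1: "emeasure lborel A = emeasure lborel (A \<inter> B) + emeasure lborel (A - B)"
    by (subst plus_emeasure) (use As Bs' in \<open>auto intro!: arg_cong[where f="emeasure lborel"]\<close>)
  have a2: "emeasure lborel B = emeasure lborel (A \<inter> B) + emeasure lborel (B - A)"
    by (subst plus_emeasure) (use As Bs' in \<open>auto intro!: arg_cong[where f="emeasure lborel"]\<close>)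
  have a3: "emeasure (Nu x) A = emeasure (Nu x) (A \<inter> B) + emeasure (Nu x) (A - B)"
    by (subst plus_emeasure) (use As Bs' in \<open>auto intro!: arg_cong[where f="emeasure (Nu x)"]\<close>)
  have a4: "emeasure (Nu x) B = emeasure (Nu x) (A \<inter> B) + emeasure (Nu x) (B - A)"
    by (subst plus_emeasure) (use As Bs' in \<open>auto intro!: arg_cong[where f="emeasure (Nu x)"]\<close>)
  have a5: "c * emeasure lborel (A - B) = emeasure (Nu x) (A - B) + s1 k x A"
  proof -
    have "c * emeasure lborel (A - B) = (\<integral>\<^sup>+t. c * indicator (A - B) t \<partial>lborel)"
      by (rule nn_integral_cmult_indicator[symmetric]) (use As Bs' in auto)
    also have "\<dots> = (\<integral>\<^sup>+t. ennreal (q x t) * indicator (A - B) t + ennreal (k * w - q x t) * indicator (A - B) t \<partial>lborel)"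
    proof (intro nn_integral_cong)
      fix t
      show "c * indicator (A - B) t = ennreal (q x t) * indicator (A - B) t + ennreal (k * w - q x t) * indicator (A - B) t"
      proof (cases "t \<in> A - B")
        case True
        hence "q x t < k * w" using A B by auto
        hence "ennreal (k * w) = ennreal (q x t) + ennreal (k * w - q x t)"
          using q_nonneg[of x t] by (subst ennreal_plus[symmetric]) auto
        thus ?thesis using True by (simp add: c_def w_def)
      qed simp
    qed
    also have "\<dots> = emeasure (Nu x) (A - B) + s1 k x A"
      by (subst nn_integral_add) (use As Bs' in \<open>simp_all add: Nu_eq s1_def B_def w_def\<close>)
    finally show ?thesis .
  qed
  have a6: "emeasure (Nu x) (B - A) = c * emeasure lborel (B - A) + s2 k x A"
  proof -
    have "emeasure (Nu x) (B - A) = (\<integral>\<^sup>+t. ennreal (q x t) * indicator (B - A) t \<partial>lborel)"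
      by (rule Nu_eq) (use As Bs' in auto)
    also have "\<dots> = (\<integral>\<^sup>+t. c * indicator (B - A) t + ennreal (q x t - k * w) * indicator (B - A) t \<partial>lborel)"
    proof (intro nn_integral_cong)
      fix t
      show "ennreal (q x t) * indicator (B - A) t = c * indicator (B - A) t + ennreal (q x t - k * w) * indicator (B - A) t"
      proof (cases "t \<in> B - A")
        case True
        hence "k * w \<le> q x t" using B by auto
        hence "ennreal (q x t) = ennreal (k * w) + ennreal (q x t - k * w)"
          using k w by (subst ennreal_plus[symmetric]) auto
        thus ?thesis using True by (simp add: c_def w_def)
      qed simp
    qed
    also have "\<dots> = c * emeasure lborel (B - A) + s2 k x A"
      by (subst nn_integral_add) (use As Bs' in \<open>simp_all add: nn_integral_cmult_indicator s2_def B_def w_def\<close>)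
    finally show ?thesis .
  qed
  show ?thesis
    unfolding B_def[symmetric] c_def[symmetric] a1 a2 a3 a4 a6
    using a5 by (simp add: distrib_left ac_simps)
qed

lemma s1_zero:
  assumes k: "k > 0" and A: "A \<in> sets lborel" "A \<subseteq> {0<..}" and z: "s1 k x A = 0"
  shows "A - hpd_rule \<kappa> H k x \<in> null_sets lborel"
proof -
  have As: "A - hpd_rule \<kappa> H k x \<in> sets borel" using A by simp
  have "AE t in lborel. ennreal (k * fH \<kappa> H x - q x t) * indicator (A - hpd_rule \<kappa> H k x) t = 0"
    using z unfolding s1_def by (subst (asm) nn_integral_0_iff_AE) (use As in auto)
  hence "AE t in lborel. t \<notin> A - hpd_rule \<kappa> H k x"
  proof eventually_elim
    case (elim t)
    show ?case
    proof
      assume tA: "t \<in> A - hpd_rule \<kappa> H k x"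
      hence "q x t < k * fH \<kappa> H x" using A hpd_pos[OF k, of x] by auto
      with elim tA show False by (simp add: indicator_def)
    qed
  qed
  thus ?thesis using As by (subst AE_iff_null_sets) auto
qed

lemma s2_zero:
  assumes k: "k > 0" and A: "A \<in> sets lborel" and z: "s2 k x A = 0"
  shows "hpd_rule \<kappa> H k x - A \<in> null_sets lborel"
proof -
  have As: "hpd_rule \<kappa> H k x - A \<in> sets borel" using A by simp
  have "AE t in lborel. ennreal (q x t - k * fH \<kappa> H x) * indicator (hpd_rule \<kappa> H k x - A) t = 0"
    using z unfolding s2_def by (subst (asm) nn_integral_0_iff_AE) (use As in auto)
  moreover have "AE t in lborel. t \<notin> {t. t > 0 \<and> postH \<kappa> H x t = k}"
    using level_x[OF k, of x] AE_not_in by blast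
  ultimately have "AE t in lborel. t \<notin> hpd_rule \<kappa> H k x - A"
  proof eventually_elim
    case (elim t)
    show ?case
    proof
      assume tA: "t \<in> hpd_rule \<kappa> H k x - A"
      hence t: "t > 0" "k * fH \<kappa> H x \<le> q x t" using hpd_pos[OF k, of x] by auto
      show False
      proof (cases "q x t = k * fH \<kappa> H x")
        case True
        hence "postH \<kappa> H x t = k" using t fH_pos[of x] by (simp add: post_eq)
        thus False using elim t by auto
      next
        case False
        hence "q x t - k * fH \<kappa> H x > 0" using t by simp
        with elim tA show False by (simp add: indicator_def)
      qed
    qed
  qed
  thus ?thesis using As by (subst AE_iff_null_sets) auto
qed

lemma B_bound:
  assumes k: "k > 0"
  shows "ennreal (k * fH \<kappa> H x) * emeasure lborel (hpd_rule \<kappa> H k x) \<le> emeasure (Nu x) (hpd_rule \<kappa> H k x)"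
proof -
  have "ennreal (k * fH \<kappa> H x) * emeasure lborel (hpd_rule \<kappa> H k x) = (\<integral>\<^sup>+t. ennreal (k * fH \<kappa> H x) * indicator (hpd_rule \<kappa> H k x) t \<partial>lborel)"
    by (rule nn_integral_cmult_indicator[symmetric]) simp
  also have "\<dots> \<le> (\<integral>\<^sup>+t. ennreal (q x t) * indicator (hpd_rule \<kappa> H k x) t \<partial>lborel)"
    by (intro nn_integral_mono) (auto simp: indicator_def hpd_pos[OF k] intro: ennreal_leI)
  also have "\<dots> = emeasure (Nu x) (hpd_rule \<kappa> H k x)" by (rule Nu_eq[symmetric]) simp
  finally show ?thesis .
qed

end

context setting begin

lemma suminf_add_enn: "(\<Sum>x. f x + g x) = (\<Sum>x. f x) + (\<Sum>x. (g x :: ennreal))"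
  by (rule suminf_add[symmetric]) auto

lemma optimal:
  assumes k: "k > 0" and covk: "measure (jointH \<kappa> H) (S k) = 1 - \<beta>" and b: "\<beta> < 1"
    and I: "meas_rule I" and covI: "coverage \<kappa> H I \<ge> 1 - \<beta>"
  shows "exp_length \<kappa> H (hpd_rule \<kappa> H k) \<le> exp_length \<kappa> H I \<and>
         (exp_length \<kappa> H I = exp_length \<kappa> H (hpd_rule \<kappa> H k) \<longrightarrow>
           (\<forall>x. emeasure lborel ((I x - hpd_rule \<kappa> H k x) \<union> (hpd_rule \<kappa> H k x - I x)) = 0))"
proof -
  interpret J: prob_space "jointH \<kappa> H" by (rule joint_prob)
  have Is: "I x \<in> sets lborel" "I x \<subseteq> {0<..}" for x using I by (auto simp: meas_rule_def)
  define B where "B x = hpd_rule \<kappa> H k x" for x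
  define CA where "CA = (\<Sum>x. emeasure (Nu x) (I x))"
  define CB where "CB = (\<Sum>x. emeasure (Nu x) (B x))"
  define EA where "EA = exp_length \<kappa> H I"
  define EB where "EB = exp_length \<kappa> H (hpd_rule \<kappa> H k)"
  define SS where "SS = (\<Sum>x. s1 k x (I x) + s2 k x (I x))"
  have CAe: "CA = emeasure (jointH \<kappa> H) {(t, x). t \<in> I x}"
    unfolding CA_def by (subst E1[OF Is(1)]) (simp add: Nu_eq[OF Is(1)])
  have CBe: "CB = emeasure (jointH \<kappa> H) (S k)"
    unfolding CB_def B_def emeasure_S by (simp add: Nu_eq)
  have CBv: "CB = ennreal (1 - \<beta>)" using covk CBe J.emeasure_eq_measure by simp
  have CAv: "CA = ennreal (coverage \<kappa> H I)" using CAe J.emeasure_eq_measure by (simp add: coverage_def)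
  have CAge: "CB \<le> CA" unfolding CBv CAv using covI by (rule ennreal_leI)
  have kw: "ennreal (k * fH \<kappa> H x) * e = ennreal k * (e * ennreal (fH \<kappa> H x))" for x e
  proof -
    have "ennreal (k * fH \<kappa> H x) = ennreal k * ennreal (fH \<kappa> H x)" using k fH_pos[of x] by (intro ennreal_mult) auto
    thus ?thesis by (metis mult.assoc mult.commute)
  qed
  have EAs: "(\<Sum>x. ennreal (k * fH \<kappa> H x) * emeasure lborel (I x)) = ennreal k * EA"
    unfolding EA_def E2 by (simp add: kw)
  have EBs: "(\<Sum>x. ennreal (k * fH \<kappa> H x) * emeasure lborel (B x)) = ennreal k * EB"
    unfolding EB_def E2 B_def by (simp add: kw)
  have key: "ennreal k * EA + CB = ennreal k * EB + CA + SS"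
  proof -
    have "ennreal k * EA + CB = (\<Sum>x. ennreal (k * fH \<kappa> H x) * emeasure lborel (I x) + emeasure (Nu x) (B x))"
      unfolding suminf_add_enn EAs CB_def ..
    also have "\<dots> = (\<Sum>x. (ennreal (k * fH \<kappa> H x) * emeasure lborel (B x) + emeasure (Nu x) (I x)) + (s1 k x (I x) + s2 k x (I x)))"
    proof (intro suminf_cong)
      fix x
      show "ennreal (k * fH \<kappa> H x) * emeasure lborel (I x) + emeasure (Nu x) (B x) = (ennreal (k * fH \<kappa> H x) * emeasure lborel (B x) + emeasure (Nu x) (I x)) + (s1 k x (I x) + s2 k x (I x))"
        using perx[OF k Is(1)[of x] Is(2)[of x], of x] unfolding B_def by (simp only: add.assoc)
    qed
    also have "\<dots> = ennreal k * EB + CA + SS"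
      unfolding suminf_add_enn EBs CA_def SS_def ..
    finally show ?thesis .
  qed
  have CBfin: "CB \<noteq> \<infinity>" unfolding CBv by simp
  have le: "ennreal k * EB \<le> ennreal k * EA"
  proof -
    have "CB + ennreal k * EB \<le> CB + ennreal k * EA"
    proof -
      have "CB + ennreal k * EB \<le> CA + ennreal k * EB" using CAge by (rule add_right_mono)
      also have "\<dots> \<le> CA + ennreal k * EB + SS" by (rule add_increasing2[OF zero_le order_refl])
      also have "\<dots> = ennreal k * EB + CA + SS" by (metis add.commute)
      also have "\<dots> = ennreal k * EA + CB" using key by simp
      also have "\<dots> = CB + ennreal k * EA" by (rule add.commute)
      finally show ?thesis .
    qed
    thus ?thesis using CBfin by (simp add: ennreal_add_left_cancel_le)
  qed
  hence EBA: "EB \<le> EA" using k by (subst (asm) ennreal_mult_le_mult_iff) auto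
  moreover have "EA = EB \<longrightarrow> (\<forall>x. emeasure lborel ((I x - B x) \<union> (B x - I x)) = 0)"
  proof (intro impI allI)
    fix x assume eq: "EA = EB"
    have kEB: "ennreal k * EB \<le> CB"
      unfolding EBs[symmetric] CB_def by (intro suminf_le) (auto simp: B_def B_bound[OF k])
    have fin: "ennreal k * EB + CB \<noteq> \<infinity>" 
    proof -
      have "ennreal k * EB < \<infinity>" using kEB CBfin by (simp add: le_less_trans top.not_eq_extremum)
      thus ?thesis using CBfin by (simp add: ennreal_add_eq_top)
    qed
    have "(ennreal k * EB + CB) + SS \<le> (ennreal k * EB + CB) + 0"
    proof -
      have "(ennreal k * EB + CB) + SS \<le> ennreal k * EB + CA + SS" using CAge by (intro add_right_mono add_left_mono)
      also have "\<dots> = ennreal k * EB + CB" using key eq by (metis add.assoc)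
      finally show ?thesis by simp
    qed
    hence "SS \<le> 0" using fin by (simp only: ennreal_add_left_cancel_le) simp
    hence "SS = 0" by simp
    hence "s1 k x (I x) + s2 k x (I x) = 0" unfolding SS_def by (subst (asm) suminf_eq_zero_iff) auto
    hence z: "s1 k x (I x) = 0" "s2 k x (I x) = 0" by auto
    have "(I x - B x) \<union> (B x - I x) \<in> null_sets lborel"
      unfolding B_def using s1_zero[OF k Is z(1)] s2_zero[OF k Is(1) z(2)] by (rule null_sets.Un)
    thus "emeasure lborel ((I x - B x) \<union> (B x - I x)) = 0" by auto
  qed
  ultimately show ?thesis by (simp add: EA_def EB_def B_def)
qed

end

theorem theorem4p1:
  fixes \<kappa> \<beta> :: real and H :: "real measure"
  assumes "\<kappa> > 0"
    and "prob_space H" and "sets H = sets borel" and "measure H {0<..} = 1"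
    and "0 < \<beta>" and "\<beta> < 1"
  shows "(\<exists>!k. k \<ge> 0 \<and> coverage \<kappa> H (hpd_rule \<kappa> H k) = 1 - \<beta>) \<and>
         (\<forall>k. k \<ge> 0 \<and> coverage \<kappa> H (hpd_rule \<kappa> H k) = 1 - \<beta> \<longrightarrow>
           (\<forall>I. meas_rule I \<and> coverage \<kappa> H I \<ge> 1 - \<beta> \<longrightarrow>
              exp_length \<kappa> H (hpd_rule \<kappa> H k) \<le> exp_length \<kappa> H I
              \<and> (exp_length \<kappa> H I = exp_length \<kappa> H (hpd_rule \<kappa> H k) \<longrightarrow>
                   (\<forall>x. emeasure lborel ((I x - hpd_rule \<kappa> H k x) \<union> (hpd_rule \<kappa> H k x - I x)) = 0))))"
proof -
  have loc: "setting \<kappa> H" unfolding setting_def using assms by auto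
  have b: "0 < \<beta>" "\<beta> < 1" using assms by auto
  note covS = setting.cov_S[OF loc]
  have ex: "\<exists>k\<ge>0. coverage \<kappa> H (hpd_rule \<kappa> H k) = 1 - \<beta>"
    using setting.exists_k[OF loc b] by (simp add: covS)
  have un: "k1 = k2" if "k1 \<ge> 0" "coverage \<kappa> H (hpd_rule \<kappa> H k1) = 1 - \<beta>"
    "k2 \<ge> 0" "coverage \<kappa> H (hpd_rule \<kappa> H k2) = 1 - \<beta>" for k1 k2
  proof (rule ccontr)
    assume ne: "k1 \<noteq> k2"
    show False
    proof (cases "k1 < k2")
      case True
      show False by (rule setting.uniq_aux[OF loc, of k1 k2]) (use that True b in \<open>auto simp: covS\<close>)
    next
      case False
      hence "k2 < k1" using ne by simp
      show False by (rule setting.uniq_aux[OF loc, of k2 k1]) (use that \<open>k2 < k1\<close> b in \<open>auto simp: covS\<close>)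
    qed
  qed
  obtain k0 where k0: "k0 \<ge> 0" "coverage \<kappa> H (hpd_rule \<kappa> H k0) = 1 - \<beta>" using ex by blast
  have part1: "\<exists>!k. k \<ge> 0 \<and> coverage \<kappa> H (hpd_rule \<kappa> H k) = 1 - \<beta>"
  proof (rule ex1I[where a=k0])
    show "k0 \<ge> 0 \<and> coverage \<kappa> H (hpd_rule \<kappa> H k0) = 1 - \<beta>" using k0 by simp
    fix k assume "k \<ge> 0 \<and> coverage \<kappa> H (hpd_rule \<kappa> H k) = 1 - \<beta>"
    thus "k = k0" using un[of k k0] k0 by simp
  qed
  have part2: "exp_length \<kappa> H (hpd_rule \<kappa> H k) \<le> exp_length \<kappa> H I
              \<and> (exp_length \<kappa> H I = exp_length \<kappa> H (hpd_rule \<kappa> H k) \<longrightarrow>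
                   (\<forall>x. emeasure lborel ((I x - hpd_rule \<kappa> H k x) \<union> (hpd_rule \<kappa> H k x - I x)) = 0))"
    if k: "k \<ge> 0" "coverage \<kappa> H (hpd_rule \<kappa> H k) = 1 - \<beta>" and I: "meas_rule I" "coverage \<kappa> H I \<ge> 1 - \<beta>" for k I
  proof -
    have kp: "k > 0"
    proof (rule ccontr)
      assume "\<not> k > 0" hence "k = 0" using k by simp
      thus False using k(2) setting.C0[OF loc] b by (simp add: covS)
    qed
    show ?thesis by (rule setting.optimal[OF loc kp _ b(2) I]) (use k in \<open>simp add: covS\<close>)
  qed
  show ?thesis
  proof (intro conjI allI impI)
    show "\<exists>!k. k \<ge> 0 \<and> coverage \<kappa> H (hpd_rule \<kappa> H k) = 1 - \<beta>" by (rule part1)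
  next
    fix k I
    assume a1: "k \<ge> 0 \<and> coverage \<kappa> H (hpd_rule \<kappa> H k) = 1 - \<beta>" and a2: "meas_rule I \<and> 1 - \<beta> \<le> coverage \<kappa> H I"
    note r = part2[of k I]
    show "exp_length \<kappa> H (hpd_rule \<kappa> H k) \<le> exp_length \<kappa> H I" using r a1 a2 by simp
    assume "exp_length \<kappa> H I = exp_length \<kappa> H (hpd_rule \<kappa> H k)"
    thus "emeasure lborel ((I x - hpd_rule \<kappa> H k x) \<union> (hpd_rule \<kappa> H k x - I x)) = 0" for x using r a1 a2 by simp
  qed
qed

end
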